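(* Let $\sigma : \mathcal{S} \to !A^\perp \parallel !B$ be a negative deterministic sequential innocent $\sim$-strategy, and let $s, s' \in S$ be such that $|[s]| = |[s']|$. Then the following are equivalent: (1) $\mathcal{P}(s) = \mathcal{P}(s')$; (2) the unique order-isomorphism $\theta : [s] \cong [s']$ is in the isomorphism family of $\mathcal{S}$; (3) the unique order-isomorphism $\theta : [s] \cong [s']$ is such that $\sigma\,\theta$ is in the isomorphism family of $!A^\perp \parallel !B$.
   Context: $e \rightarrow e'$ denotes immediate causal dependency ($e<e'$ with nothing strictly between). $A,B$ are negative arenas (countable forest-shaped, conflict-free, alternating esps with negative minimal events), and $!A$ is the tcg of index functions $\alpha:[a]\to\omega$ whose symmetry consists of the label-preserving order-isomorphisms between configurations; $\mathrm{lbl}\,\alpha=a$. A $\sim$-strategy is a map of essps which is courteous (if $s_1 \rightarrow s_2$ with $\mathrm{pol}(s_1)=+$ or $\mathrm{pol}(s_2)=-$ then $\sigma s_1 \rightarrow \sigma s_2$), strong-receptive and thin; negative means minimal events of $S$ are negative. Sequential innocent: backward sequential ($[s]$ totally ordered) and forward sequential (if $s \rightarrow s_1$, $s \rightarrow s_2$ with $s_1,s_2$ positive, then $[s_1]\cup[s_2]$ is not a configuration). Deterministic: every finite subset of $S$ is consistent. For $s\in S$ with $[s]$ the chain $s_0 \rightarrow s_1 \rightarrow\dots\rightarrow s_n=s$, $\mathcal{P}(s)$ is the pointing sequence $(\mathrm{lbl}(\sigma s_0),\dots,\mathrm{lbl}(\sigma s_n))$ in which $\mathrm{lbl}(\sigma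 s_i)$ points to $\mathrm{lbl}(\sigma s_j)$ if $\sigma s_j \rightarrow \sigma s_i$, or if $j=0$ and $\sigma s_i$ is minimal in $!A$. *)

theory Defs
  imports Main "HOL-Library.Countable_Set"
begin

definition event_structure :: "'e set \<Rightarrow> ('e \<Rightarrow> 'e \<Rightarrow> bool) \<Rightarrow> 'e set set \<Rightarrow> bool" where
  "event_structure E le Con \<longleftrightarrow>
     (\<forall>e e'. le e e' \<longrightarrow> e \<in> E \<and> e' \<in> E) \<and>
     (\<forall>e\<in>E. le e e) \<and>
     (\<forall>e e' e''. le e e' \<longrightarrow> le e' e'' \<longrightarrow> le e e'') \<and>
     (\<forall>e e'. le e e' \<longrightarrow> le e' e \<longrightarrow> e = e') \<and>
     (\<forall>e\<in>E. finite {e'. le e' e}) \<and>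
     (\<forall>X\<in>Con. finite X \<and> X \<subseteq> E) \<and>
     {} \<in> Con \<and>
     (\<forall>e\<in>E. {e} \<in> Con) \<and>
     (\<forall>X Y. Y \<in> Con \<longrightarrow> X \<subseteq> Y \<longrightarrow> X \<in> Con) \<and>
     (\<forall>X e e'. X \<in> Con \<longrightarrow> e \<in> X \<longrightarrow> le e' e \<longrightarrow> insert e' X \<in> Con)"

definition cause :: "('e \<Rightarrow> 'e \<Rightarrow> bool) \<Rightarrow> 'e \<Rightarrow> 'e set" where
  "cause le e = {e'. le e' e}"

definition downclosed :: "('e \<Rightarrow> 'e \<Rightarrow> bool) \<Rightarrow> 'e set \<Rightarrow> bool" where
  "downclosed le x \<longleftrightarrow> (\<forall>e\<in>x. \<forall>e'. le e' e \<longrightarrow> e' \<in> x)"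

definition conf :: "'e set \<Rightarrow> ('e \<Rightarrow> 'e \<Rightarrow> bool) \<Rightarrow> 'e set set \<Rightarrow> 'e set \<Rightarrow> bool" where
  "conf E le Con x \<longleftrightarrow> x \<subseteq> E \<and> finite x \<and> downclosed le x \<and> x \<in> Con"

definition imm :: "('e \<Rightarrow> 'e \<Rightarrow> bool) \<Rightarrow> 'e \<Rightarrow> 'e \<Rightarrow> bool" where
  "imm le e e' \<longleftrightarrow> le e e' \<and> e \<noteq> e' \<and>
     \<not> (\<exists>e''. le e e'' \<and> le e'' e' \<and> e'' \<noteq> e \<and> e'' \<noteq> e')"

definition is_min :: "('e \<Rightarrow> 'e \<Rightarrow> bool) \<Rightarrow> 'e \<Rightarrow> bool" where
  "is_min le e \<longleftrightarrow> (\<forall>e'. le e' e \<longrightarrow> e' = e)"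

definition bij_rel :: "('e \<times> 'f) set \<Rightarrow> 'e set \<Rightarrow> 'f set \<Rightarrow> bool" where
  "bij_rel \<theta> x y \<longleftrightarrow> \<theta> \<subseteq> x \<times> y \<and> (\<forall>a\<in>x. \<exists>!b. (a, b) \<in> \<theta>) \<and> (\<forall>b\<in>y. \<exists>!a. (a, b) \<in> \<theta>)"

definition order_pres :: "('e \<Rightarrow> 'e \<Rightarrow> bool) \<Rightarrow> ('f \<Rightarrow> 'f \<Rightarrow> bool) \<Rightarrow> ('e \<times> 'f) set \<Rightarrow> bool" where
  "order_pres le le' \<theta> \<longleftrightarrow> (\<forall>a b a' b'. (a, b) \<in> \<theta> \<longrightarrow> (a', b') \<in> \<theta> \<longrightarrow> (le a a' \<longleftrightarrow> le' b b'))"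

definition order_iso_rel :: "('e \<Rightarrow> 'e \<Rightarrow> bool) \<Rightarrow> ('e \<times> 'e) set \<Rightarrow> 'e set \<Rightarrow> 'e set \<Rightarrow> bool" where
  "order_iso_rel le \<theta> x y \<longleftrightarrow> bij_rel \<theta> x y \<and> order_pres le le \<theta>"

definition iso_family :: "'e set \<Rightarrow> ('e \<Rightarrow> 'e \<Rightarrow> bool) \<Rightarrow> 'e set set \<Rightarrow> ('e \<times> 'e) set set \<Rightarrow> bool" where
  "iso_family E le Con Iso \<longleftrightarrow>
     (\<forall>\<theta>\<in>Iso. conf E le Con (Domain \<theta>) \<and> conf E le Con (Range \<theta>) \<and>
               bij_rel \<theta> (Domain \<theta>) (Range \<theta>)) \<and>
     (\<forall>x. conf E le Con x \<longrightarrow> Id_on x \<in> Iso) \<and>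
     (\<forall>\<theta>\<in>Iso. \<theta>\<inverse> \<in> Iso) \<and>
     (\<forall>\<theta>\<in>Iso. \<forall>\<phi>\<in>Iso. Range \<theta> = Domain \<phi> \<longrightarrow> \<theta> O \<phi> \<in> Iso) \<and>
     (\<forall>\<theta>\<in>Iso. \<forall>x. conf E le Con x \<longrightarrow> x \<subseteq> Domain \<theta> \<longrightarrow> \<theta> \<inter> (x \<times> UNIV) \<in> Iso) \<and>
     (\<forall>\<theta>\<in>Iso. \<forall>x. conf E le Con x \<longrightarrow> Domain \<theta> \<subseteq> x \<longrightarrow>
                  (\<exists>\<theta>'\<in>Iso. \<theta> \<subseteq> \<theta>' \<and> Domain \<theta>' = x))"

definition ess :: "'e set \<Rightarrow> ('e \<Rightarrow> 'e \<Rightarrow> bool) \<Rightarrow> 'e set set \<Rightarrow> ('e \<times> 'e) set set \<Rightarrow> bool" where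
  "ess E le Con Iso \<longleftrightarrow> event_structure E le Con \<and> iso_family E le Con Iso"

(* Polarity: True = positive, False = negative.
   A negative arena: countable, forest-shaped, conflict-free (every finite set consistent),
   alternating esp whose minimal events are negative. *)
definition neg_arena :: "'a set \<Rightarrow> ('a \<Rightarrow> 'a \<Rightarrow> bool) \<Rightarrow> ('a \<Rightarrow> bool) \<Rightarrow> bool" where
  "neg_arena E le pol \<longleftrightarrow>
     event_structure E le {X. finite X \<and> X \<subseteq> E} \<and>
     countable E \<and>
     (\<forall>a\<in>E. \<forall>b c. le b a \<longrightarrow> le c a \<longrightarrow> le b c \<or> le c b) \<and>
     (\<forall>a a'. imm le a a' \<longrightarrow> pol a \<noteq> pol a') \<and>
     (\<forall>a\<in>E. is_min le a \<longrightarrow> \<not> pol a)"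

(* events of !A: index functions alpha : [a] \<rightarrow> \<omega>, as partial maps with domain [a] *)
definition bang_ev :: "'a set \<Rightarrow> ('a \<Rightarrow> 'a \<Rightarrow> bool) \<Rightarrow> ('a \<rightharpoonup> nat) set" where
  "bang_ev E le = {\<alpha>. \<exists>a\<in>E. dom \<alpha> = cause le a}"

definition bang_lbl :: "('a \<Rightarrow> 'a \<Rightarrow> bool) \<Rightarrow> ('a \<rightharpoonup> nat) \<Rightarrow> 'a" where
  "bang_lbl le \<alpha> = (THE a. dom \<alpha> = cause le a)"

definition bang_le :: "'a set \<Rightarrow> ('a \<Rightarrow> 'a \<Rightarrow> bool) \<Rightarrow> ('a \<rightharpoonup> nat) \<Rightarrow> ('a \<rightharpoonup> nat) \<Rightarrow> bool" where
  "bang_le E le \<alpha> \<beta> \<longleftrightarrow> \<alpha> \<in> bang_ev E le \<and> \<beta> \<in> bang_ev E le \<and>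
     le (bang_lbl le \<alpha>) (bang_lbl le \<beta>) \<and> \<alpha> = \<beta> |` cause le (bang_lbl le \<alpha>)"

definition bang_Con :: "'a set \<Rightarrow> ('a \<Rightarrow> 'a \<Rightarrow> bool) \<Rightarrow> ('a \<rightharpoonup> nat) set set" where
  "bang_Con E le = {X. finite X \<and> X \<subseteq> bang_ev E le}"

definition bang_iso :: "'a set \<Rightarrow> ('a \<Rightarrow> 'a \<Rightarrow> bool) \<Rightarrow> (('a \<rightharpoonup> nat) \<times> ('a \<rightharpoonup> nat)) set set" where
  "bang_iso E le = {\<theta>. \<exists>x y.
      conf (bang_ev E le) (bang_le E le) (bang_Con E le) x \<and>
      conf (bang_ev E le) (bang_le E le) (bang_Con E le) y \<and>
      order_iso_rel (bang_le E le) \<theta> x y \<and>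
      (\<forall>\<alpha> \<beta>. (\<alpha>, \<beta>) \<in> \<theta> \<longrightarrow> bang_lbl le \<beta> = bang_lbl le \<alpha>)}"

type_synonym ('a, 'b) gev = "('a \<rightharpoonup> nat) + ('b \<rightharpoonup> nat)"

definition G_ev :: "'a set \<Rightarrow> ('a \<Rightarrow> 'a \<Rightarrow> bool) \<Rightarrow> 'b set \<Rightarrow> ('b \<Rightarrow> 'b \<Rightarrow> bool) \<Rightarrow> ('a, 'b) gev set" where
  "G_ev EA leA EB leB = Inl ` bang_ev EA leA \<union> Inr ` bang_ev EB leB"

definition G_le :: "'a set \<Rightarrow> ('a \<Rightarrow> 'a \<Rightarrow> bool) \<Rightarrow> 'b set \<Rightarrow> ('b \<Rightarrow> 'b \<Rightarrow> bool) \<Rightarrow>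
    ('a, 'b) gev \<Rightarrow> ('a, 'b) gev \<Rightarrow> bool" where
  "G_le EA leA EB leB e e' = (case (e, e') of
      (Inl \<alpha>, Inl \<alpha>') \<Rightarrow> bang_le EA leA \<alpha> \<alpha>'
    | (Inr \<beta>, Inr \<beta>') \<Rightarrow> bang_le EB leB \<beta> \<beta>'
    | _ \<Rightarrow> False)"

definition G_Con :: "'a set \<Rightarrow> ('a \<Rightarrow> 'a \<Rightarrow> bool) \<Rightarrow> 'b set \<Rightarrow> ('b \<Rightarrow> 'b \<Rightarrow> bool) \<Rightarrow> ('a, 'b) gev set set" where
  "G_Con EA leA EB leB = {X. finite X \<and> X \<subseteq> G_ev EA leA EB leB}"

definition G_pol :: "('a \<Rightarrow> 'a \<Rightarrow> bool) \<Rightarrow> ('a \<Rightarrow> bool) \<Rightarrow> ('b \<Rightarrow> 'b \<Rightarrow> bool) \<Rightarrow> ('b \<Rightarrow> bool) \<Rightarrow>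
    ('a, 'b) gev \<Rightarrow> bool" where
  "G_pol leA polA leB polB e = (case e of
      Inl \<alpha> \<Rightarrow> \<not> polA (bang_lbl leA \<alpha>)
    | Inr \<beta> \<Rightarrow> polB (bang_lbl leB \<beta>))"

definition G_iso :: "'a set \<Rightarrow> ('a \<Rightarrow> 'a \<Rightarrow> bool) \<Rightarrow> 'b set \<Rightarrow> ('b \<Rightarrow> 'b \<Rightarrow> bool) \<Rightarrow>
    (('a, 'b) gev \<times> ('a, 'b) gev) set set" where
  "G_iso EA leA EB leB = {\<theta>. \<exists>\<theta>A\<in>bang_iso EA leA. \<exists>\<theta>B\<in>bang_iso EB leB.
      \<theta> = map_prod Inl Inl ` \<theta>A \<union> map_prod Inr Inr ` \<theta>B}"

definition G_lbl :: "('a \<Rightarrow> 'a \<Rightarrow> bool) \<Rightarrow> ('b \<Rightarrow> 'b \<Rightarrow> bool) \<Rightarrow> ('a, 'b) gev \<Rightarrow> 'a + 'b" where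
  "G_lbl leA leB e = (case e of Inl \<alpha> \<Rightarrow> Inl (bang_lbl leA \<alpha>) | Inr \<beta> \<Rightarrow> Inr (bang_lbl leB \<beta>))"

definition G_minA :: "'a set \<Rightarrow> ('a \<Rightarrow> 'a \<Rightarrow> bool) \<Rightarrow> ('a, 'b) gev \<Rightarrow> bool" where
  "G_minA EA leA e = (case e of Inl \<alpha> \<Rightarrow> \<alpha> \<in> bang_ev EA leA \<and> is_min (bang_le EA leA) \<alpha> | Inr _ \<Rightarrow> False)"

definition map_essp ::
  "'s set \<Rightarrow> ('s \<Rightarrow> 's \<Rightarrow> bool) \<Rightarrow> 's set set \<Rightarrow> ('s \<Rightarrow> bool) \<Rightarrow> ('s \<times> 's) set set \<Rightarrow>
   'g set \<Rightarrow> ('g \<Rightarrow> 'g \<Rightarrow> bool) \<Rightarrow> 'g set set \<Rightarrow> ('g \<Rightarrow> bool) \<Rightarrow> ('g \<times> 'g) set set \<Rightarrow>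
   ('s \<Rightarrow> 'g) \<Rightarrow> bool" where
  "map_essp ES leS ConS polS IsoS EG leG ConG polG IsoG \<sigma> \<longleftrightarrow>
     (\<forall>s\<in>ES. \<sigma> s \<in> EG) \<and>
     (\<forall>x. conf ES leS ConS x \<longrightarrow> conf EG leG ConG (\<sigma> ` x)) \<and>
     (\<forall>x. conf ES leS ConS x \<longrightarrow> inj_on \<sigma> x) \<and>
     (\<forall>s\<in>ES. polG (\<sigma> s) = polS s) \<and>
     (\<forall>\<theta>\<in>IsoS. map_prod \<sigma> \<sigma> ` \<theta> \<in> IsoG)"

definition courteous :: "('s \<Rightarrow> 's \<Rightarrow> bool) \<Rightarrow> ('s \<Rightarrow> bool) \<Rightarrow> ('g \<Rightarrow> 'g \<Rightarrow> bool) \<Rightarrow> ('s \<Rightarrow> 'g) \<Rightarrow> bool" where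
  "courteous leS polS leG \<sigma> \<longleftrightarrow>
     (\<forall>s1 s2. imm leS s1 s2 \<longrightarrow> (polS s1 \<or> \<not> polS s2) \<longrightarrow> imm leG (\<sigma> s1) (\<sigma> s2))"

definition strong_receptive ::
  "('s \<times> 's) set set \<Rightarrow> ('g \<Rightarrow> bool) \<Rightarrow> ('g \<times> 'g) set set \<Rightarrow> ('s \<Rightarrow> 'g) \<Rightarrow> bool" where
  "strong_receptive IsoS polG IsoG \<sigma> \<longleftrightarrow>
     (\<forall>\<theta>\<in>IsoS. \<forall>a1 a2. \<not> polG a1 \<longrightarrow> \<not> polG a2 \<longrightarrow>
        a1 \<notin> Domain (map_prod \<sigma> \<sigma> ` \<theta>) \<longrightarrow>
        insert (a1, a2) (map_prod \<sigma> \<sigma> ` \<theta>) \<in> IsoG \<longrightarrow>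
        (\<exists>!p. fst p \<notin> Domain \<theta> \<and> insert p \<theta> \<in> IsoS \<and> \<sigma> (fst p) = a1 \<and> \<sigma> (snd p) = a2))"

definition thin :: "('s \<Rightarrow> bool) \<Rightarrow> ('s \<times> 's) set set \<Rightarrow> bool" where
  "thin polS IsoS \<longleftrightarrow>
     (\<forall>\<theta>\<in>IsoS. \<forall>s t t'. polS s \<longrightarrow> s \<notin> Domain \<theta> \<longrightarrow>
        insert (s, t) \<theta> \<in> IsoS \<longrightarrow> insert (s, t') \<theta> \<in> IsoS \<longrightarrow> t = t')"

definition tilde_strategy ::
  "'s set \<Rightarrow> ('s \<Rightarrow> 's \<Rightarrow> bool) \<Rightarrow> 's set set \<Rightarrow> ('s \<Rightarrow> bool) \<Rightarrow> ('s \<times> 's) set set \<Rightarrow>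
   'g set \<Rightarrow> ('g \<Rightarrow> 'g \<Rightarrow> bool) \<Rightarrow> 'g set set \<Rightarrow> ('g \<Rightarrow> bool) \<Rightarrow> ('g \<times> 'g) set set \<Rightarrow>
   ('s \<Rightarrow> 'g) \<Rightarrow> bool" where
  "tilde_strategy ES leS ConS polS IsoS EG leG ConG polG IsoG \<sigma> \<longleftrightarrow>
     ess ES leS ConS IsoS \<and>
     map_essp ES leS ConS polS IsoS EG leG ConG polG IsoG \<sigma> \<and>
     courteous leS polS leG \<sigma> \<and>
     strong_receptive IsoS polG IsoG \<sigma> \<and>
     thin polS IsoS"

definition negative_strat :: "'s set \<Rightarrow> ('s \<Rightarrow> 's \<Rightarrow> bool) \<Rightarrow> ('s \<Rightarrow> bool) \<Rightarrow> bool" where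
  "negative_strat ES leS polS \<longleftrightarrow> (\<forall>s\<in>ES. is_min leS s \<longrightarrow> \<not> polS s)"

definition deterministic :: "'s set \<Rightarrow> 's set set \<Rightarrow> bool" where
  "deterministic ES ConS \<longleftrightarrow> (\<forall>X. finite X \<longrightarrow> X \<subseteq> ES \<longrightarrow> X \<in> ConS)"

definition backward_sequential :: "'s set \<Rightarrow> ('s \<Rightarrow> 's \<Rightarrow> bool) \<Rightarrow> bool" where
  "backward_sequential ES leS \<longleftrightarrow>
     (\<forall>s\<in>ES. \<forall>a b. leS a s \<longrightarrow> leS b s \<longrightarrow> leS a b \<or> leS b a)"

definition forward_sequential :: "'s set \<Rightarrow> ('s \<Rightarrow> 's \<Rightarrow> bool) \<Rightarrow> 's set set \<Rightarrow> ('s \<Rightarrow> bool) \<Rightarrow> bool" where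
  "forward_sequential ES leS ConS polS \<longleftrightarrow>
     (\<forall>s s1 s2. imm leS s s1 \<longrightarrow> imm leS s s2 \<longrightarrow> s1 \<noteq> s2 \<longrightarrow> polS s1 \<longrightarrow> polS s2 \<longrightarrow>
        \<not> conf ES leS ConS (cause leS s1 \<union> cause leS s2))"

definition sequential_innocent :: "'s set \<Rightarrow> ('s \<Rightarrow> 's \<Rightarrow> bool) \<Rightarrow> 's set set \<Rightarrow> ('s \<Rightarrow> bool) \<Rightarrow> bool" where
  "sequential_innocent ES leS ConS polS \<longleftrightarrow>
     backward_sequential ES leS \<and> forward_sequential ES leS ConS polS"

(* the i-th element s_i of the chain [s] = s_0 \<rightarrow> s_1 \<rightarrow> ... \<rightarrow> s_n = s *)
definition chain_at :: "('s \<Rightarrow> 's \<Rightarrow> bool) \<Rightarrow> 's \<Rightarrow> nat \<Rightarrow> 's" where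
  "chain_at leS s i = (THE e. leS e s \<and> card (cause leS e) = Suc i)"

(* P(s): the list of labels lbl(\<sigma> s_i) together with the pointer relation:
   (i, j) in the relation means that lbl(\<sigma> s_i) points to lbl(\<sigma> s_j) *)
definition pointing_seq ::
  "'a set \<Rightarrow> ('a \<Rightarrow> 'a \<Rightarrow> bool) \<Rightarrow> 'b set \<Rightarrow> ('b \<Rightarrow> 'b \<Rightarrow> bool) \<Rightarrow>
   ('s \<Rightarrow> 's \<Rightarrow> bool) \<Rightarrow> ('s \<Rightarrow> ('a, 'b) gev) \<Rightarrow> 's \<Rightarrow> ('a + 'b) list \<times> (nat \<times> nat) set" where
  "pointing_seq EA leA EB leB leS \<sigma> s =
    (let n = card (cause leS s); c = chain_at leS s in
     (map (\<lambda>i. G_lbl leA leB (\<sigma> (c i))) [0..<n],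
      {(i, j). i < n \<and> j < n \<and>
        (imm (G_le EA leA EB leB) (\<sigma> (c j)) (\<sigma> (c i)) \<or> (j = 0 \<and> G_minA EA leA (\<sigma> (c i))))}))"

definition chain_iso :: "('s \<Rightarrow> 's \<Rightarrow> bool) \<Rightarrow> 's \<Rightarrow> 's \<Rightarrow> ('s \<times> 's) set" where
  "chain_iso leS s s' = (THE \<theta>. order_iso_rel leS \<theta> (cause leS s) (cause leS s'))"

end

theory Submission
  imports Defs
begin



lemma es_props:
  assumes "event_structure E le Con"
  shows es_le_E: "le e e' \<Longrightarrow> e \<in> E \<and> e' \<in> E"
    and es_refl: "e \<in> E \<Longrightarrow> le e e"
    and es_trans: "le e e' \<Longrightarrow> le e' e'' \<Longrightarrow> le e e''"
    and es_antisym: "le e e' \<Longrightarrow> le e' e \<Longrightarrow> e = e'"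
    and es_fin: "e \<in> E \<Longrightarrow> finite {e'. le e' e}"
  using assms unfolding event_structure_def by (meson)+




locale chainctx =
  fixes E :: "'e set" and le :: "'e \<Rightarrow> 'e \<Rightarrow> bool" and Con and s :: 'e
  assumes es: "event_structure E le Con" and sE: "s \<in> E"
    and bs: "\<And>a b. le a s \<Longrightarrow> le b s \<Longrightarrow> le a b \<or> le b a"
begin

abbreviation "n \<equiv> card (cause le s)"
abbreviation "c \<equiv> chain_at le s"

lemma cs_fin: "finite (cause le s)"
  using es_fin[OF es sE] by (simp add: cause_def)

lemma s_in: "s \<in> cause le s"
  using es_refl[OF es sE] by (simp add: cause_def)

lemma n_pos: "0 < n"
  using cs_fin s_in by (auto simp: card_gt_0_iff)

lemma cause_sub: "le e s \<Longrightarrow> cause le e \<subseteq> cause le s"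
  using es_trans[OF es] by (auto simp: cause_def)

lemma cause_fin: "le e s \<Longrightarrow> finite (cause le e)"
  using cause_sub cs_fin finite_subset by blast

lemma e_in_cause: "le e s \<Longrightarrow> e \<in> cause le e"
  using es_refl[OF es] es_le_E[OF es] by (auto simp: cause_def)

lemma card_lt: "le e s \<Longrightarrow> le e e' \<Longrightarrow> e \<noteq> e' \<Longrightarrow> le e' s \<Longrightarrow> card (cause le e) < card (cause le e')"
proof -
  assume a: "le e s" "le e e'" "e \<noteq> e'" "le e' s"
  have "cause le e \<subseteq> cause le e'" using es_trans[OF es] a by (auto simp: cause_def)
  moreover have "e' \<in> cause le e'" using e_in_cause a by blast
  moreover have "e' \<notin> cause le e" using es_antisym[OF es] a by (auto simp: cause_def)
  ultimately have "cause le e \<subset> cause le e'" by blast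
  then show ?thesis using cause_fin[OF a(4)] by (simp add: psubset_card_mono)
qed

lemma g_inj: "inj_on (\<lambda>e. card (cause le e)) (cause le s)"
proof (rule inj_onI)
  fix x y assume x: "x \<in> cause le s" and y: "y \<in> cause le s" and eq: "card (cause le x) = card (cause le y)"
  show "x = y"
  proof (rule ccontr)
    assume ne: "x \<noteq> y"
    from x y have "le x s" "le y s" by (auto simp: cause_def)
    with bs have "le x y \<or> le y x" by blast
    then show False using card_lt[of x y] card_lt[of y x] ne eq \<open>le x s\<close> \<open>le y s\<close> by auto
  qed
qed

lemma g_img: "(\<lambda>e. card (cause le e)) ` (cause le s) = {1..n}"
proof -
  have sub: "(\<lambda>e. card (cause le e)) ` (cause le s) \<subseteq> {1..n}"
  proof
    fix k assume "k \<in> (\<lambda>e. card (cause le e)) ` (cause le s)"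
    then obtain e where e: "le e s" and k: "k = card (cause le e)" by (auto simp: cause_def)
    have "1 \<le> k" using k e_in_cause[OF e] cause_fin[OF e] by (auto simp: card_gt_0_iff Suc_le_eq)
    moreover have "k \<le> n" using k card_mono[OF cs_fin cause_sub[OF e]] by simp
    ultimately show "k \<in> {1..n}" by simp
  qed
  have "card ((\<lambda>e. card (cause le e)) ` (cause le s)) = n" using card_image[OF g_inj] by simp
  then show ?thesis using sub by (simp add: card_subset_eq)
qed

lemma chain_ex1: "i < n \<Longrightarrow> \<exists>!e. le e s \<and> card (cause le e) = Suc i"
proof -
  assume i: "i < n"
  then have "Suc i \<in> (\<lambda>e. card (cause le e)) ` (cause le s)" using g_img by simp
  then obtain e where e: "le e s" "card (cause le e) = Suc i" by (auto simp: cause_def)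
  show ?thesis
  proof (rule ex1I[of _ e])
    show "le e s \<and> card (cause le e) = Suc i" using e by simp
    fix y assume "le y s \<and> card (cause le y) = Suc i"
    then show "y = e" using inj_onD[OF g_inj, of y e] e by (auto simp: cause_def)
  qed
qed

lemma c_prop: "i < n \<Longrightarrow> le (c i) s \<and> card (cause le (c i)) = Suc i"
  unfolding chain_at_def using theI'[OF chain_ex1] by blast

lemma c_eqI: "i < n \<Longrightarrow> le e s \<Longrightarrow> card (cause le e) = Suc i \<Longrightarrow> c i = e"
  using chain_ex1 c_prop by blast

lemma c_inj: "i < n \<Longrightarrow> j < n \<Longrightarrow> c i = c j \<Longrightarrow> i = j"
  using c_prop by (metis Suc_inject)

lemma c_surj: "le e s \<Longrightarrow> \<exists>i<n. c i = e"
proof -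
  assume e: "le e s"
  have "card (cause le e) \<in> {1..n}" using g_img e by (auto simp: cause_def)
  then obtain i where i: "card (cause le e) = Suc i" "i < n"
    by (cases "card (cause le e)") auto
  then show ?thesis using c_eqI e by blast
qed

lemma c_le_iff: "i < n \<Longrightarrow> j < n \<Longrightarrow> le (c i) (c j) \<longleftrightarrow> i \<le> j"
proof -
  assume i: "i < n" and j: "j < n"
  have ci: "le (c i) s" "card (cause le (c i)) = Suc i" using c_prop[OF i] by auto
  have cj: "le (c j) s" "card (cause le (c j)) = Suc j" using c_prop[OF j] by auto
  show ?thesis
  proof
    assume "le (c i) (c j)"
    then show "i \<le> j" using card_lt[of "c i" "c j"] ci cj by (cases "c i = c j") (auto simp: c_inj[OF i j])
  next
    assume ij: "i \<le> j"
    show "le (c i) (c j)"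
    proof (rule ccontr)
      assume "\<not> le (c i) (c j)"
      then have "le (c j) (c i)" "c i \<noteq> c j" using bs ci cj es_refl[OF es] es_le_E[OF es] by metis+
      then show False using card_lt[of "c j" "c i"] ci cj ij by auto
    qed
  qed
qed

lemma c_last: "c (n - 1) = s"
  using c_eqI[of "n - 1" s] n_pos es_refl[OF es sE] by simp

lemma cause_c: "i < n \<Longrightarrow> cause le (c i) = c ` {..i}"
proof
  assume i: "i < n"
  show "cause le (c i) \<subseteq> c ` {..i}"
  proof
    fix e assume "e \<in> cause le (c i)"
    then have e: "le e (c i)" by (simp add: cause_def)
    then have "le e s" using es_trans[OF es] c_prop[OF i] by blast
    then obtain j where j: "j < n" "c j = e" using c_surj by blast
    then have "j \<le> i" using c_le_iff[OF j(1) i] e by simp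
    then show "e \<in> c ` {..i}" using j by auto
  qed
  show "c ` {..i} \<subseteq> cause le (c i)" using c_le_iff i by (auto simp: cause_def)
qed

lemma c_imm: "Suc i < n \<Longrightarrow> imm le (c i) (c (Suc i))"
proof -
  assume i: "Suc i < n"
  have "le (c i) (c (Suc i))" using c_le_iff[of i "Suc i"] i by simp
  moreover have "c i \<noteq> c (Suc i)" using c_inj[of i "Suc i"] i by auto
  moreover have "\<not> (\<exists>e. le (c i) e \<and> le e (c (Suc i)) \<and> e \<noteq> c i \<and> e \<noteq> c (Suc i))"
  proof
    assume "\<exists>e. le (c i) e \<and> le e (c (Suc i)) \<and> e \<noteq> c i \<and> e \<noteq> c (Suc i)"
    then obtain e where e: "le (c i) e" "le e (c (Suc i))" "e \<noteq> c i" "e \<noteq> c (Suc i)" by blast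
    then have "e \<in> cause le (c (Suc i))" by (simp add: cause_def)
    then obtain j where j: "j \<le> Suc i" "e = c j" using cause_c[OF i] by auto
    then have "i \<le> j" using c_le_iff[of i j] e(1) i by auto
    then show False using j e by (metis le_SucE le_antisym)
  qed
  ultimately show ?thesis by (simp add: imm_def)
qed

lemma c0_min: "is_min le (c 0)"
  unfolding is_min_def
proof (intro allI impI)
  fix e assume "le e (c 0)"
  then have "e \<in> cause le (c 0)" by (simp add: cause_def)
  then have "e \<in> c ` {..0}" using cause_c[of 0] n_pos by simp
  then show "e = c 0" by simp
qed

end




lemma bij_rel_DR: "bij_rel \<theta> x y \<Longrightarrow> Domain \<theta> = x \<and> Range \<theta> = y"
  unfolding bij_rel_def by blast

locale twochain = A: chainctx E le Con s + B: chainctx E le Con s'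
  for E :: "'e set" and le Con s s' +
  assumes eqn: "card (cause le s) = card (cause le s')"
begin

definition R :: "nat \<Rightarrow> ('e \<times> 'e) set" where
  "R k = {(chain_at le s i, chain_at le s' i) | i. i < k}"

lemma R_iso: "order_iso_rel le (R (card (cause le s))) (cause le s) (cause le s')"
proof -
  let ?n = "card (cause le s)"
  let ?c = "chain_at le s" and ?d = "chain_at le s'"
  have bij: "bij_rel (R ?n) (cause le s) (cause le s')"
    unfolding bij_rel_def
  proof (intro conjI ballI)
    show "R ?n \<subseteq> cause le s \<times> cause le s'"
      using A.c_prop B.c_prop eqn by (auto simp: R_def cause_def)
  next
    fix a assume "a \<in> cause le s"
    then obtain i where i: "i < ?n" "?c i = a" using A.c_surj by (auto simp: cause_def)
    show "\<exists>!b. (a, b) \<in> R ?n"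
    proof (rule ex1I[of _ "?d i"])
      show "(a, ?d i) \<in> R ?n" using i by (auto simp: R_def)
      fix b assume "(a, b) \<in> R ?n"
      then obtain j where "j < ?n" "a = ?c j" "b = ?d j" by (auto simp: R_def)
      then show "b = ?d i" using A.c_inj i by metis
    qed
  next
    fix b assume "b \<in> cause le s'"
    then obtain i where i: "i < ?n" "?d i = b" using B.c_surj eqn by (auto simp: cause_def)
    show "\<exists>!a. (a, b) \<in> R ?n"
    proof (rule ex1I[of _ "?c i"])
      show "(?c i, b) \<in> R ?n" using i by (auto simp: R_def)
      fix a assume "(a, b) \<in> R ?n"
      then obtain j where "j < ?n" "a = ?c j" "b = ?d j" by (auto simp: R_def)
      then show "a = ?c i" using B.c_inj i eqn by metis
    qed
  qed
  have op: "order_pres le le (R ?n)"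
    unfolding order_pres_def
  proof (intro allI impI)
    fix a b a' b' assume "(a, b) \<in> R ?n" "(a', b') \<in> R ?n"
    then obtain i j where "i < ?n" "a = ?c i" "b = ?d i" "j < ?n" "a' = ?c j" "b' = ?d j"
      by (auto simp: R_def)
    then show "le a a' = le b b'" using A.c_le_iff B.c_le_iff eqn by simp
  qed
  show ?thesis using bij op by (simp add: order_iso_rel_def)
qed

lemma R_unique:
  assumes T: "order_iso_rel le T (cause le s) (cause le s')"
  shows "T = R (card (cause le s))"
proof -
  let ?n = "card (cause le s)"
  let ?c = "chain_at le s" and ?d = "chain_at le s'"
  have bT: "bij_rel T (cause le s) (cause le s')" and oT: "order_pres le le T"
    using T by (auto simp: order_iso_rel_def)
  define f where "f x = (THE y. (x, y) \<in> T)" for x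
  have fT: "x \<in> cause le s \<Longrightarrow> (x, f x) \<in> T" for x
    using bT unfolding bij_rel_def f_def by (metis theI')
  have fu: "(x, y) \<in> T \<Longrightarrow> f x = y" for x y
    using bT fT unfolding bij_rel_def by blast
  have Tsub: "(x, y) \<in> T \<Longrightarrow> x \<in> cause le s \<and> y \<in> cause le s'" for x y
    using bT unfolding bij_rel_def by blast
  have key: "(x, y) \<in> T \<Longrightarrow> card (cause le x) = card (cause le y)" for x y
  proof -
    assume xy: "(x, y) \<in> T"
    have xs: "le x s" and ys: "le y s'" using Tsub[OF xy] by (auto simp: cause_def)
    have inj: "inj_on f (cause le x)"
    proof (rule inj_onI)
      fix u v assume u: "u \<in> cause le x" and v: "v \<in> cause le x" and eq: "f u = f v"
      have "u \<in> cause le s" "v \<in> cause le s" using u v A.cause_sub[OF xs] by auto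
      then have "(u, f u) \<in> T" "(v, f u) \<in> T" using fT eq by metis+
      moreover have "f u \<in> cause le s'" using Tsub calculation by blast
      ultimately show "u = v" using bT unfolding bij_rel_def by blast
    qed
    have img: "f ` cause le x = cause le y"
    proof
      show "f ` cause le x \<subseteq> cause le y"
      proof
        fix w assume "w \<in> f ` cause le x"
        then obtain u where u: "u \<in> cause le x" "w = f u" by blast
        have "u \<in> cause le s" using u A.cause_sub[OF xs] by auto
        then have "(u, w) \<in> T" using fT u by simp
        then have "le w y" using oT xy u unfolding order_pres_def by (auto simp: cause_def)
        then show "w \<in> cause le y" by (simp add: cause_def)
      qed
    next
      show "cause le y \<subseteq> f ` cause le x"
      proof
        fix w assume w: "w \<in> cause le y"
        then have "w \<in> cause le s'" using B.cause_sub[OF ys] by auto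
        then obtain u where u: "(u, w) \<in> T" using bT unfolding bij_rel_def by blast
        then have "le u x" using oT xy w unfolding order_pres_def by (auto simp: cause_def)
        then show "w \<in> f ` cause le x" using fu[OF u] by (auto simp: cause_def)
      qed
    qed
    show ?thesis using card_image[OF inj] img by simp
  qed
  show ?thesis
  proof
    show "T \<subseteq> R ?n"
    proof
      fix p assume p: "p \<in> T"
      obtain x y where xy: "p = (x, y)" by (cases p)
      then have xs: "le x s" and ys: "le y s'" using Tsub p by (auto simp: cause_def)
      obtain i where i: "i < ?n" "?c i = x" using A.c_surj[OF xs] by blast
      have "card (cause le y) = Suc i" using key p xy A.c_prop i by metis
      then have "?d i = y" using B.c_eqI i ys eqn by simp
      then show "p \<in> R ?n" using xy i by (auto simp: R_def)
    qed
  next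
    show "R ?n \<subseteq> T"
    proof
      fix p assume "p \<in> R ?n"
      then obtain i where i: "i < ?n" "p = (?c i, ?d i)" by (auto simp: R_def)
      have ci: "?c i \<in> cause le s" using A.c_prop i by (simp add: cause_def)
      then have "(?c i, f (?c i)) \<in> T" using fT by simp
      moreover have "(?c i, ?d i) \<in> T"
      proof -
        have y: "(?c i, f (?c i)) \<in> T" using fT ci by simp
        have "le (f (?c i)) s'" using Tsub y by (simp add: cause_def)
        moreover have "card (cause le (f (?c i))) = Suc i" using key[OF y] A.c_prop i by simp
        ultimately have "?d i = f (?c i)" using B.c_eqI i eqn by simp
        then show ?thesis using y by simp
      qed
      then show "p \<in> T" using i by simp
    qed
  qed
qed

lemma chain_iso_R: "chain_iso le s s' = R (card (cause le s))"
  unfolding chain_iso_def using R_iso R_unique by (metis the_equality)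

end




lemma na_es: "neg_arena E le pol \<Longrightarrow> event_structure E le {X. finite X \<and> X \<subseteq> E}"
  by (simp add: neg_arena_def)

lemma na_forest: "neg_arena E le pol \<Longrightarrow> a \<in> E \<Longrightarrow> le b a \<Longrightarrow> le c a \<Longrightarrow> le b c \<or> le c b"
  by (simp add: neg_arena_def)

lemma bang_lbl_eq:
  assumes es: "event_structure E le Con" and a: "a \<in> E" and d: "dom \<alpha> = cause le a"
  shows "bang_lbl le \<alpha> = a"
  unfolding bang_lbl_def
proof (rule the_equality)
  show "dom \<alpha> = cause le a" by fact
  fix b assume b: "dom \<alpha> = cause le b"
  have "a \<in> cause le a" using es_refl[OF es a] by (simp add: cause_def)
  then have "le a b" using b d by (auto simp: cause_def)
  then have "b \<in> E" using es_le_E[OF es] by blast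
  then have "b \<in> cause le b" using es_refl[OF es] by (simp add: cause_def)
  then have "le b a" using b d by (auto simp: cause_def)
  then show "b = a" using es_antisym[OF es] \<open>le a b\<close> by blast
qed

lemma bang_ev_lbl:
  assumes es: "event_structure E le Con" and "\<alpha> \<in> bang_ev E le"
  shows "bang_lbl le \<alpha> \<in> E \<and> dom \<alpha> = cause le (bang_lbl le \<alpha>)"
  using assms bang_lbl_eq[OF es] unfolding bang_ev_def by auto

lemma restrict_dom_self: "m |` dom m = m"
  by (rule ext) (auto simp: restrict_map_def dom_def)

lemma bang_refl:
  assumes es: "event_structure E le Con" and a: "\<alpha> \<in> bang_ev E le"
  shows "bang_le E le \<alpha> \<alpha>"
  using bang_ev_lbl[OF es a] es_refl[OF es] a restrict_dom_self[of \<alpha>] unfolding bang_le_def by simp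

lemma bang_trans:
  assumes es: "event_structure E le Con" and "bang_le E le \<alpha> \<beta>" and "bang_le E le \<beta> \<gamma>"
  shows "bang_le E le \<alpha> \<gamma>"
proof -
  have l1: "le (bang_lbl le \<alpha>) (bang_lbl le \<beta>)" and e1: "\<alpha> = \<beta> |` cause le (bang_lbl le \<alpha>)"
    and l2: "le (bang_lbl le \<beta>) (bang_lbl le \<gamma>)" and e2: "\<beta> = \<gamma> |` cause le (bang_lbl le \<beta>)"
    and m: "\<alpha> \<in> bang_ev E le" "\<gamma> \<in> bang_ev E le"
    using assms unfolding bang_le_def by auto
  have sub: "cause le (bang_lbl le \<alpha>) \<subseteq> cause le (bang_lbl le \<beta>)"
    using l1 es_trans[OF es] by (auto simp: cause_def)
  have "\<alpha> = \<gamma> |` cause le (bang_lbl le \<alpha>)"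
    using e1 e2 sub by (metis inf.absorb_iff2 restrict_restrict)
  then show ?thesis using m l1 l2 es_trans[OF es] unfolding bang_le_def by blast
qed

lemma bang_forest:
  assumes na: "neg_arena E le pol" and b: "bang_le E le \<beta> \<alpha>" and c: "bang_le E le \<gamma> \<alpha>"
  shows "bang_le E le \<beta> \<gamma> \<or> bang_le E le \<gamma> \<beta>"
proof -
  note es = na_es[OF na]
  have m: "\<alpha> \<in> bang_ev E le" "\<beta> \<in> bang_ev E le" "\<gamma> \<in> bang_ev E le" using b c by (auto simp: bang_le_def)
  have lb: "le (bang_lbl le \<beta>) (bang_lbl le \<alpha>)" and eb: "\<beta> = \<alpha> |` cause le (bang_lbl le \<beta>)"
    and lc: "le (bang_lbl le \<gamma>) (bang_lbl le \<alpha>)" and ec: "\<gamma> = \<alpha> |` cause le (bang_lbl le \<gamma>)"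
    using b c unfolding bang_le_def by auto
  have aE: "bang_lbl le \<alpha> \<in> E" using bang_ev_lbl[OF es m(1)] by simp
  have "le (bang_lbl le \<beta>) (bang_lbl le \<gamma>) \<or> le (bang_lbl le \<gamma>) (bang_lbl le \<beta>)"
    using na_forest[OF na aE lb lc] .
  then show ?thesis
  proof
    assume l: "le (bang_lbl le \<beta>) (bang_lbl le \<gamma>)"
    have sub: "cause le (bang_lbl le \<beta>) \<subseteq> cause le (bang_lbl le \<gamma>)"
      using l es_trans[OF es] by (auto simp: cause_def)
    have "\<beta> = \<gamma> |` cause le (bang_lbl le \<beta>)" using eb ec sub by (metis inf.absorb_iff2 restrict_restrict)
    then show ?thesis using m l unfolding bang_le_def by blast
  next
    assume l: "le (bang_lbl le \<gamma>) (bang_lbl le \<beta>)"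
    have sub: "cause le (bang_lbl le \<gamma>) \<subseteq> cause le (bang_lbl le \<beta>)"
      using l es_trans[OF es] by (auto simp: cause_def)
    have "\<gamma> = \<beta> |` cause le (bang_lbl le \<gamma>)" using eb ec sub by (metis inf.absorb_iff2 restrict_restrict)
    then show ?thesis using m l unfolding bang_le_def by blast
  qed
qed

section \<open>Game\<close>

lemma G_le_simps[simp]:
  "G_le EA leA EB leB (Inl \<alpha>) (Inl \<alpha>') = bang_le EA leA \<alpha> \<alpha>'"
  "G_le EA leA EB leB (Inr \<beta>) (Inr \<beta>') = bang_le EB leB \<beta> \<beta>'"
  "G_le EA leA EB leB (Inl \<alpha>) (Inr \<beta>') = False"
  "G_le EA leA EB leB (Inr \<beta>) (Inl \<alpha>') = False"
  by (simp_all add: G_le_def)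

lemma G_ev_simps[simp]:
  "Inl \<alpha> \<in> G_ev EA leA EB leB \<longleftrightarrow> \<alpha> \<in> bang_ev EA leA"
  "Inr \<beta> \<in> G_ev EA leA EB leB \<longleftrightarrow> \<beta> \<in> bang_ev EB leB"
  by (auto simp: G_ev_def)

locale game =
  fixes EA :: "'a set" and leA polA and EB :: "'b set" and leB polB
  assumes nA: "neg_arena EA leA polA" and nB: "neg_arena EB leB polB"
begin

abbreviation "Gle \<equiv> G_le EA leA EB leB"
abbreviation "Gev \<equiv> G_ev EA leA EB leB"

lemma esA: "event_structure EA leA {X. finite X \<and> X \<subseteq> EA}" using na_es[OF nA] .
lemma esB: "event_structure EB leB {X. finite X \<and> X \<subseteq> EB}" using na_es[OF nB] .

lemma G_refl: "e \<in> Gev \<Longrightarrow> Gle e e"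
  by (cases e) (auto simp: bang_refl[OF esA] bang_refl[OF esB])

lemma G_trans: "Gle a b \<Longrightarrow> Gle b c \<Longrightarrow> Gle a c"
  by (cases a; cases b; cases c) (auto intro: bang_trans[OF esA] bang_trans[OF esB])

lemma G_forest: "Gle b a \<Longrightarrow> Gle c a \<Longrightarrow> Gle b c \<or> Gle c b"
  by (cases a; cases b; cases c) (auto dest: bang_forest[OF nA] bang_forest[OF nB])

lemma G_le_ev: "Gle a b \<Longrightarrow> a \<in> Gev \<and> b \<in> Gev"
  by (cases a; cases b) (auto simp: bang_le_def)

lemma G_imm_below:
  assumes imm: "imm Gle p e" and g: "Gle g e" and ne: "g \<noteq> e"
  shows "Gle g p"
proof -
  have pe: "Gle p e" "p \<noteq> e" using imm by (auto simp: imm_def)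
  from G_forest[OF g pe(1)] show ?thesis
  proof
    assume "Gle p g"
    then have "g = p" using imm g ne unfolding imm_def by blast
    then show ?thesis using G_refl G_le_ev pe by blast
  qed
qed

end




lemma bang_iso_insert:
  assumes es: "event_structure E le Con" and th: "\<theta> \<in> bang_iso E le"
    and na: "\<alpha> \<notin> Domain \<theta>" and na': "\<alpha>' \<notin> Range \<theta>"
    and cx: "conf (bang_ev E le) (bang_le E le) (bang_Con E le) (insert \<alpha> (Domain \<theta>))"
    and cy: "conf (bang_ev E le) (bang_le E le) (bang_Con E le) (insert \<alpha>' (Range \<theta>))"
    and lb: "bang_lbl le \<alpha>' = bang_lbl le \<alpha>"
    and ord: "\<And>\<gamma> \<gamma>'. (\<gamma>, \<gamma>') \<in> \<theta> \<Longrightarrow> bang_le E le \<gamma> \<alpha> \<longleftrightarrow> bang_le E le \<gamma>' \<alpha>'"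
  shows "insert (\<alpha>, \<alpha>') \<theta> \<in> bang_iso E le"
proof -
  obtain x y where x: "conf (bang_ev E le) (bang_le E le) (bang_Con E le) x"
    and y: "conf (bang_ev E le) (bang_le E le) (bang_Con E le) y"
    and oi: "order_iso_rel (bang_le E le) \<theta> x y"
    and lbl: "\<forall>a b. (a, b) \<in> \<theta> \<longrightarrow> bang_lbl le b = bang_lbl le a"
    using th unfolding bang_iso_def by blast
  have bj: "bij_rel \<theta> x y" and op: "order_pres (bang_le E le) (bang_le E le) \<theta>"
    using oi by (auto simp: order_iso_rel_def)
  have D: "Domain \<theta> = x" and Rg: "Range \<theta> = y" using bij_rel_DR[OF bj] by auto
  have dx: "downclosed (bang_le E le) x" and dy: "downclosed (bang_le E le) y"
    using x y by (auto simp: conf_def)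
  have aev: "\<alpha> \<in> bang_ev E le" and aev': "\<alpha>' \<in> bang_ev E le" using cx cy by (auto simp: conf_def)
  let ?t = "insert (\<alpha>, \<alpha>') \<theta>"
  have bj': "bij_rel ?t (insert \<alpha> x) (insert \<alpha>' y)"
    using bj na na' D Rg unfolding bij_rel_def by blast
  have op': "order_pres (bang_le E le) (bang_le E le) ?t"
    unfolding order_pres_def
  proof (intro allI impI)
    fix a b a' b' assume p1: "(a, b) \<in> ?t" and p2: "(a', b') \<in> ?t"
    have nA: "\<not> bang_le E le \<alpha> g" if "g \<in> x" for g
      using dx that na D unfolding downclosed_def by blast
    have nA': "\<not> bang_le E le \<alpha>' g" if "g \<in> y" for g
      using dy that na' Rg unfolding downclosed_def by blast
    show "bang_le E le a a' = bang_le E le b b'"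
    proof (cases "(a, b) = (\<alpha>, \<alpha>')")
      case True
      show ?thesis
      proof (cases "(a', b') = (\<alpha>, \<alpha>')")
        case True
        then show ?thesis using \<open>(a, b) = (\<alpha>, \<alpha>')\<close> bang_refl[OF es aev] bang_refl[OF es aev'] by auto
      next
        case False
        then have "(a', b') \<in> \<theta>" using p2 False by blast
        then have "a' \<in> x" "b' \<in> y" using D Rg by auto
        then show ?thesis using nA nA' True by auto
      qed
    next
      case False
      then have ab: "(a, b) \<in> \<theta>" using p1 False by blast
      show ?thesis
      proof (cases "(a', b') = (\<alpha>, \<alpha>')")
        case True
        then show ?thesis using ord[OF ab] by simp
      next
        case False
        then have "(a', b') \<in> \<theta>" using p2 False by blast
        then show ?thesis using op ab unfolding order_pres_def by blast
      qed
    qed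
  qed
  have lbl': "\<forall>a b. (a, b) \<in> ?t \<longrightarrow> bang_lbl le b = bang_lbl le a" using lbl lb by auto
  show ?thesis unfolding bang_iso_def
    using cx cy D Rg bj' op' lbl' by (auto simp: order_iso_rel_def)
qed

context game begin

abbreviation "GCon \<equiv> G_Con EA leA EB leB"
abbreviation "Giso \<equiv> G_iso EA leA EB leB"
abbreviation "Glbl \<equiv> G_lbl leA leB"

lemma conf_projA:
  assumes "conf Gev Gle GCon Z"
  shows "conf (bang_ev EA leA) (bang_le EA leA) (bang_Con EA leA) (Inl -` Z)"
proof -
  have Z: "Z \<subseteq> Gev" "finite Z" "downclosed Gle Z" using assms by (auto simp: conf_def)
  have f: "finite (Inl -` Z)" using Z(2) by (simp add: finite_vimageI)
  have s: "Inl -` Z \<subseteq> bang_ev EA leA" using Z(1) by auto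
  have d: "downclosed (bang_le EA leA) (Inl -` Z)"
    using Z(3) unfolding downclosed_def by (metis G_le_simps(1) vimage_eq)
  show ?thesis using f s d by (simp add: conf_def bang_Con_def)
qed

lemma conf_projB:
  assumes "conf Gev Gle GCon Z"
  shows "conf (bang_ev EB leB) (bang_le EB leB) (bang_Con EB leB) (Inr -` Z)"
proof -
  have Z: "Z \<subseteq> Gev" "finite Z" "downclosed Gle Z" using assms by (auto simp: conf_def)
  have f: "finite (Inr -` Z)" using Z(2) by (simp add: finite_vimageI)
  have s: "Inr -` Z \<subseteq> bang_ev EB leB" using Z(1) by auto
  have d: "downclosed (bang_le EB leB) (Inr -` Z)"
    using Z(3) unfolding downclosed_def by (metis G_le_simps(2) vimage_eq)
  show ?thesis using f s d by (simp add: conf_def bang_Con_def)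
qed

lemma bang_iso_lbl: "\<theta> \<in> bang_iso E le \<Longrightarrow> (a, b) \<in> \<theta> \<Longrightarrow> bang_lbl le b = bang_lbl le a"
  unfolding bang_iso_def by blast

lemma bang_iso_op: "\<theta> \<in> bang_iso E le \<Longrightarrow> order_pres (bang_le E le) (bang_le E le) \<theta>"
  unfolding bang_iso_def order_iso_rel_def by blast

lemma Giso_lbl: "\<phi> \<in> Giso \<Longrightarrow> (a, b) \<in> \<phi> \<Longrightarrow> Glbl a = Glbl b"
  unfolding G_iso_def by (auto simp: G_lbl_def dest: bang_iso_lbl)

lemma Giso_op: "\<phi> \<in> Giso \<Longrightarrow> (a, b) \<in> \<phi> \<Longrightarrow> (a', b') \<in> \<phi> \<Longrightarrow> Gle a a' \<longleftrightarrow> Gle b b'"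
  unfolding G_iso_def by (auto dest!: bang_iso_op simp: order_pres_def)

lemma G_pol_lbl: "Glbl a = Glbl b \<Longrightarrow> G_pol leA polA leB polB a = G_pol leA polA leB polB b"
  by (cases a; cases b) (auto simp: G_lbl_def G_pol_def)

lemma Giso_insert:
  assumes ph: "\<phi> \<in> Giso" and ne: "e \<notin> Domain \<phi>" and ne': "e' \<notin> Range \<phi>"
    and cx: "conf Gev Gle GCon (insert e (Domain \<phi>))"
    and cy: "conf Gev Gle GCon (insert e' (Range \<phi>))"
    and lb: "Glbl e = Glbl e'"
    and ord: "\<And>a b. (a, b) \<in> \<phi> \<Longrightarrow> Gle a e \<longleftrightarrow> Gle b e'"
  shows "insert (e, e') \<phi> \<in> Giso"
proof -
  obtain tA tB where tA: "tA \<in> bang_iso EA leA" and tB: "tB \<in> bang_iso EB leB"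
    and phi: "\<phi> = map_prod Inl Inl ` tA \<union> map_prod Inr Inr ` tB"
    using ph unfolding G_iso_def by blast
  have DA: "Domain tA = Inl -` Domain \<phi>" and RA: "Range tA = Inl -` Range \<phi>"
    and DB: "Domain tB = Inr -` Domain \<phi>" and RB: "Range tB = Inr -` Range \<phi>"
    unfolding phi by force+
  show ?thesis
  proof (cases e)
    case (Inl \<alpha>)
    then obtain \<alpha>' where e': "e' = Inl \<alpha>'" and l: "bang_lbl leA \<alpha>' = bang_lbl leA \<alpha>"
      using lb by (cases e') (auto simp: G_lbl_def)
    have "insert (\<alpha>, \<alpha>') tA \<in> bang_iso EA leA"
    proof (rule bang_iso_insert[OF esA tA])
      show "\<alpha> \<notin> Domain tA" using ne DA Inl by auto
      show "\<alpha>' \<notin> Range tA" using ne' RA e' by auto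
      have "insert \<alpha> (Domain tA) = Inl -` insert e (Domain \<phi>)" using DA Inl by auto
      then show "conf (bang_ev EA leA) (bang_le EA leA) (bang_Con EA leA) (insert \<alpha> (Domain tA))"
        using conf_projA[OF cx] by simp
      have "insert \<alpha>' (Range tA) = Inl -` insert e' (Range \<phi>)" using RA e' by auto
      then show "conf (bang_ev EA leA) (bang_le EA leA) (bang_Con EA leA) (insert \<alpha>' (Range tA))"
        using conf_projA[OF cy] by simp
      show "bang_lbl leA \<alpha>' = bang_lbl leA \<alpha>" by fact
      fix g g' assume "(g, g') \<in> tA"
      then have "(Inl g, Inl g') \<in> \<phi>" unfolding phi by force
      then show "bang_le EA leA g \<alpha> = bang_le EA leA g' \<alpha>'" using ord Inl e' by fastforce
    qed
    moreover have "insert (e, e') \<phi> = map_prod Inl Inl ` insert (\<alpha>, \<alpha>') tA \<union> map_prod Inr Inr ` tB"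
      using phi Inl e' by auto
    ultimately show ?thesis using tB unfolding G_iso_def by blast
  next
    case (Inr \<alpha>)
    then obtain \<alpha>' where e': "e' = Inr \<alpha>'" and l: "bang_lbl leB \<alpha>' = bang_lbl leB \<alpha>"
      using lb by (cases e') (auto simp: G_lbl_def)
    have "insert (\<alpha>, \<alpha>') tB \<in> bang_iso EB leB"
    proof (rule bang_iso_insert[OF esB tB])
      show "\<alpha> \<notin> Domain tB" using ne DB Inr by auto
      show "\<alpha>' \<notin> Range tB" using ne' RB e' by auto
      have "insert \<alpha> (Domain tB) = Inr -` insert e (Domain \<phi>)" using DB Inr by auto
      then show "conf (bang_ev EB leB) (bang_le EB leB) (bang_Con EB leB) (insert \<alpha> (Domain tB))"
        using conf_projB[OF cx] by simp
      have "insert \<alpha>' (Range tB) = Inr -` insert e' (Range \<phi>)" using RB e' by auto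
      then show "conf (bang_ev EB leB) (bang_le EB leB) (bang_Con EB leB) (insert \<alpha>' (Range tB))"
        using conf_projB[OF cy] by simp
      show "bang_lbl leB \<alpha>' = bang_lbl leB \<alpha>" by fact
      fix g g' assume "(g, g') \<in> tB"
      then have "(Inr g, Inr g') \<in> \<phi>" unfolding phi by force
      then show "bang_le EB leB g \<alpha> = bang_le EB leB g' \<alpha>'" using ord Inr e' by fastforce
    qed
    moreover have "insert (e, e') \<phi> = map_prod Inl Inl ` tA \<union> map_prod Inr Inr ` insert (\<alpha>, \<alpha>') tB"
      using phi Inr e' by auto
    ultimately show ?thesis using tA unfolding G_iso_def by blast
  qed
qed

end




lemma bij_rel_card:
  assumes b: "bij_rel \<theta> x y" and f: "finite x"
  shows "card x = card y"
proof -
  have "bij_betw fst \<theta> x"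
    unfolding bij_betw_def
  proof
    show "inj_on fst \<theta>"
    proof (rule inj_onI)
      fix p q assume p: "p \<in> \<theta>" and q: "q \<in> \<theta>" and e: "fst p = fst q"
      obtain a u v where "p = (a, u)" "q = (a, v)" using e by (cases p; cases q) auto
      moreover have "a \<in> x" using b p calculation unfolding bij_rel_def by blast
      ultimately show "p = q" using b p q unfolding bij_rel_def by blast
    qed
    show "fst ` \<theta> = x" using b unfolding bij_rel_def by force
  qed
  moreover have "bij_betw snd \<theta> y"
    unfolding bij_betw_def
  proof
    show "inj_on snd \<theta>"
    proof (rule inj_onI)
      fix p q assume p: "p \<in> \<theta>" and q: "q \<in> \<theta>" and e: "snd p = snd q"
      obtain a u v where "p = (u, a)" "q = (v, a)" using e by (cases p; cases q) auto
      moreover have "a \<in> y" using b p calculation unfolding bij_rel_def by blast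
      ultimately show "p = q" using b p q unfolding bij_rel_def by blast
    qed
    show "snd ` \<theta> = y" using b unfolding bij_rel_def by force
  qed
  ultimately show ?thesis using bij_betw_same_card by metis
qed

lemma imm_xfer:
  assumes L: "\<And>a b. a < n \<Longrightarrow> b < n \<Longrightarrow> L (f a) (f b) \<longleftrightarrow> L (g a) (g b)"
    and fi: "\<And>a b. a < n \<Longrightarrow> b < n \<Longrightarrow> f a = f b \<longleftrightarrow> a = b"
    and gi: "\<And>a b. a < n \<Longrightarrow> b < n \<Longrightarrow> g a = g b \<longleftrightarrow> a = b"
    and below: "\<And>z b. b < n \<Longrightarrow> L z (g b) \<Longrightarrow> \<exists>m<n. z = g m"
    and i: "i < n" and j: "j < n"
    and im: "imm L (f j) (f i)"
  shows "imm L (g j) (g i)"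
proof -
  have 1: "L (g j) (g i)" using im L i j by (simp add: imm_def)
  have 2: "g j \<noteq> g i" using im fi gi i j by (simp add: imm_def)
  have 3: "\<not> (\<exists>z. L (g j) z \<and> L z (g i) \<and> z \<noteq> g j \<and> z \<noteq> g i)"
  proof
    assume "\<exists>z. L (g j) z \<and> L z (g i) \<and> z \<noteq> g j \<and> z \<noteq> g i"
    then obtain z where z: "L (g j) z" "L z (g i)" "z \<noteq> g j" "z \<noteq> g i" by blast
    obtain m where m: "m < n" "z = g m" using below[OF i z(2)] by blast
    have "L (f j) (f m)" "L (f m) (f i)" using z m L i j by auto
    moreover have "f m \<noteq> f j" "f m \<noteq> f i" using z m fi gi i j by auto
    ultimately show False using im by (auto simp: imm_def)
  qed
  show ?thesis using 1 2 3 by (simp add: imm_def)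
qed

lemma min_xfer:
  assumes L: "\<And>a b. a < n \<Longrightarrow> b < n \<Longrightarrow> L (f a) (f b) \<longleftrightarrow> L (g a) (g b)"
    and fi: "\<And>a b. a < n \<Longrightarrow> b < n \<Longrightarrow> f a = f b \<longleftrightarrow> a = b"
    and gi: "\<And>a b. a < n \<Longrightarrow> b < n \<Longrightarrow> g a = g b \<longleftrightarrow> a = b"
    and below: "\<And>z b. b < n \<Longrightarrow> L z (g b) \<Longrightarrow> \<exists>m<n. z = g m"
    and i: "i < n"
    and mn: "\<forall>z. L z (f i) \<longrightarrow> z = f i"
  shows "\<forall>z. L z (g i) \<longrightarrow> z = g i"
proof (intro allI impI)
  fix z assume z: "L z (g i)"
  obtain m where m: "m < n" "z = g m" using below[OF i z] by blast
  then have "L (f m) (f i)" using L i z by simp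
  then have "f m = f i" using mn by blast
  then show "z = g i" using fi gi m i by simp
qed

context game begin

lemma G_minA_alt: "G_minA EA leA e \<longleftrightarrow> (isl e \<and> e \<in> Gev \<and> (\<forall>z. Gle z e \<longrightarrow> z = e))"
proof (cases e)
  case (Inl \<alpha>)
  have "(\<forall>z. Gle z e \<longrightarrow> z = e) \<longleftrightarrow> is_min (bang_le EA leA) \<alpha>"
    unfolding is_min_def Inl
  proof
    assume h: "\<forall>z. Gle z (Inl \<alpha>) \<longrightarrow> z = Inl \<alpha>"
    show "\<forall>e'. bang_le EA leA e' \<alpha> \<longrightarrow> e' = \<alpha>"
      using h by (metis G_le_simps(1) sum.inject(1))
  next
    assume h: "\<forall>e'. bang_le EA leA e' \<alpha> \<longrightarrow> e' = \<alpha>"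
    show "\<forall>z. Gle z (Inl \<alpha>) \<longrightarrow> z = Inl \<alpha>"
    proof (intro allI impI)
      fix z assume "Gle z (Inl \<alpha>)"
      then show "z = Inl \<alpha>" using h by (cases z) auto
    qed
  qed
  then show ?thesis using Inl by (simp add: G_minA_def)
next
  case (Inr b)
  then show ?thesis by (simp add: G_minA_def)
qed

lemma lbl_isl: "Glbl a = Glbl b \<Longrightarrow> isl a = isl b"
  by (cases a; cases b) (auto simp: G_lbl_def)

end




locale mainctx = game EA leA polA EB leB polB
  for EA :: "'a set" and leA polA and EB :: "'b set" and leB polB +
  fixes ES :: "'s set" and leS ConS polS IsoS and \<sigma> :: "'s \<Rightarrow> ('a, 'b) gev" and s s' :: 's
  assumes strat: "tilde_strategy ES leS ConS polS IsoS
           (G_ev EA leA EB leB) (G_le EA leA EB leB) (G_Con EA leA EB leB)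
           (G_pol leA polA leB polB) (G_iso EA leA EB leB) \<sigma>"
    and neg: "negative_strat ES leS polS"
    and det: "deterministic ES ConS"
    and seq: "sequential_innocent ES leS ConS polS"
    and sS: "s \<in> ES" and sS': "s' \<in> ES"
    and eqn: "card (cause leS s) = card (cause leS s')"
begin

abbreviation "Gpol \<equiv> G_pol leA polA leB polB"

lemma esS: "event_structure ES leS ConS" and isoS: "iso_family ES leS ConS IsoS"
  using strat by (auto simp: tilde_strategy_def ess_def)

lemma me: "map_essp ES leS ConS polS IsoS Gev Gle GCon Gpol Giso \<sigma>"
  using strat by (simp add: tilde_strategy_def)

lemma sig_ev: "x \<in> ES \<Longrightarrow> \<sigma> x \<in> Gev" using me by (simp add: map_essp_def)
lemma sig_conf: "conf ES leS ConS x \<Longrightarrow> conf Gev Gle GCon (\<sigma> ` x)" using me by (simp add: map_essp_def)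
lemma sig_inj: "conf ES leS ConS x \<Longrightarrow> inj_on \<sigma> x" using me by (simp add: map_essp_def)
lemma sig_pol: "x \<in> ES \<Longrightarrow> Gpol (\<sigma> x) = polS x" using me by (simp add: map_essp_def)
lemma sig_iso: "\<theta> \<in> IsoS \<Longrightarrow> map_prod \<sigma> \<sigma> ` \<theta> \<in> Giso" using me by (simp add: map_essp_def)

lemma court: "imm leS a b \<Longrightarrow> polS a \<or> \<not> polS b \<Longrightarrow> imm Gle (\<sigma> a) (\<sigma> b)"
  using strat unfolding tilde_strategy_def courteous_def by blast

lemma srec: "strong_receptive IsoS Gpol Giso \<sigma>"
  using strat by (simp add: tilde_strategy_def)

lemma bseq: "x \<in> ES \<Longrightarrow> leS a x \<Longrightarrow> leS b x \<Longrightarrow> leS a b \<or> leS b a"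
  using seq by (simp add: sequential_innocent_def backward_sequential_def)

lemma fseq: "imm leS x y1 \<Longrightarrow> imm leS x y2 \<Longrightarrow> y1 \<noteq> y2 \<Longrightarrow> polS y1 \<Longrightarrow> polS y2 \<Longrightarrow>
   \<not> conf ES leS ConS (cause leS y1 \<union> cause leS y2)"
  using seq by (simp add: sequential_innocent_def forward_sequential_def)

lemma iso_props:
  shows iso_conf: "\<theta> \<in> IsoS \<Longrightarrow> conf ES leS ConS (Domain \<theta>) \<and> conf ES leS ConS (Range \<theta>) \<and> bij_rel \<theta> (Domain \<theta>) (Range \<theta>)"
    and iso_id: "conf ES leS ConS x \<Longrightarrow> Id_on x \<in> IsoS"
    and iso_inv: "\<theta> \<in> IsoS \<Longrightarrow> \<theta>\<inverse> \<in> IsoS"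
    and iso_restr: "\<theta> \<in> IsoS \<Longrightarrow> conf ES leS ConS x \<Longrightarrow> x \<subseteq> Domain \<theta> \<Longrightarrow> \<theta> \<inter> (x \<times> UNIV) \<in> IsoS"
    and iso_ext: "\<theta> \<in> IsoS \<Longrightarrow> conf ES leS ConS x \<Longrightarrow> Domain \<theta> \<subseteq> x \<Longrightarrow> \<exists>\<theta>'\<in>IsoS. \<theta> \<subseteq> \<theta>' \<and> Domain \<theta>' = x"
  using isoS unfolding iso_family_def by (meson)+

lemma cause_conf: "e \<in> ES \<Longrightarrow> conf ES leS ConS (cause leS e)"
proof -
  assume e: "e \<in> ES"
  have f: "finite (cause leS e)" using es_fin[OF esS e] by (simp add: cause_def)
  have sub: "cause leS e \<subseteq> ES" using es_le_E[OF esS] by (auto simp: cause_def)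
  have "downclosed leS (cause leS e)" using es_trans[OF esS] by (auto simp: downclosed_def cause_def)
  moreover have "cause leS e \<in> ConS" using det f sub by (simp add: deterministic_def)
  ultimately show ?thesis using f sub by (simp add: conf_def)
qed

lemma union_conf: "conf ES leS ConS x \<Longrightarrow> conf ES leS ConS y \<Longrightarrow> conf ES leS ConS (x \<union> y)"
proof -
  assume x: "conf ES leS ConS x" and y: "conf ES leS ConS y"
  have "x \<union> y \<subseteq> ES" "finite (x \<union> y)" using x y by (auto simp: conf_def)
  moreover have "downclosed leS (x \<union> y)" using x y by (auto simp: conf_def downclosed_def)
  moreover have "x \<union> y \<in> ConS" using det calculation by (simp add: deterministic_def)
  ultimately show ?thesis by (simp add: conf_def)
qed

lemma empty_conf: "conf ES leS ConS {}"
  using esS by (simp add: conf_def downclosed_def event_structure_def)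

sublocale tc: twochain ES leS ConS s s'
proof -
  show "twochain ES leS ConS s s'"
    unfolding twochain_def chainctx_def twochain_axioms_def
    using esS sS sS' eqn bseq by blast
qed

abbreviation "n \<equiv> card (cause leS s)"
abbreviation "c \<equiv> chain_at leS s"
abbreviation "d \<equiv> chain_at leS s'"

lemma c_ES: "i < n \<Longrightarrow> c i \<in> ES"
  using tc.A.c_prop es_le_E[OF esS] by blast
lemma d_ES: "i < n \<Longrightarrow> d i \<in> ES"
  using tc.B.c_prop es_le_E[OF esS] eqn by metis

lemma c_cs: "i < n \<Longrightarrow> c i \<in> cause leS s" using tc.A.c_prop by (simp add: cause_def)
lemma d_cs: "i < n \<Longrightarrow> d i \<in> cause leS s'" using tc.B.c_prop eqn by (simp add: cause_def)

lemma sig_c_inj: "i < n \<Longrightarrow> j < n \<Longrightarrow> \<sigma> (c i) = \<sigma> (c j) \<longleftrightarrow> i = j"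
  using inj_onD[OF sig_inj[OF cause_conf[OF sS]] _ c_cs c_cs] tc.A.c_inj by metis
lemma sig_d_inj: "i < n \<Longrightarrow> j < n \<Longrightarrow> \<sigma> (d i) = \<sigma> (d j) \<longleftrightarrow> i = j"
  using inj_onD[OF sig_inj[OF cause_conf[OF sS']] _ d_cs d_cs] tc.B.c_inj eqn by metis

lemma dom_R: "k \<le> n \<Longrightarrow> Domain (tc.R k) = c ` {..<k}"
  by (auto simp: tc.R_def)
lemma ran_R: "k \<le> n \<Longrightarrow> Range (tc.R k) = d ` {..<k}"
  by (auto simp: tc.R_def)

end




context mainctx begin

lemma R_Suc: "tc.R (Suc k) = insert (c k, d k) (tc.R k)"
  by (auto simp: tc.R_def less_Suc_eq)

lemma cause_ck: "k < n \<Longrightarrow> cause leS (c k) = c ` {..k}" using tc.A.cause_c by simp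
lemma cause_dk: "k < n \<Longrightarrow> cause leS (d k) = d ` {..k}" using tc.B.cause_c eqn by simp

lemma Domain_mp: "Domain (map_prod f g ` r) = f ` Domain r" by force
lemma Range_mp: "Range (map_prod f g ` r) = g ` Range r" by force

lemma atMost_lessThan_Suc: "{..k} = insert k {..<k}" for k :: nat by auto

lemma step_neg:
  assumes k: "k < n" and Rk: "tc.R k \<in> IsoS" and np: "\<not> polS (c k)"
    and lbls: "Glbl (\<sigma> (c k)) = Glbl (\<sigma> (d k))"
  shows "tc.R (Suc k) \<in> IsoS"
proof -
  let ?\<phi> = "map_prod \<sigma> \<sigma> ` tc.R k"
  have ph: "?\<phi> \<in> Giso" using sig_iso[OF Rk] .
  have Dphi: "Domain ?\<phi> = \<sigma> ` c ` {..<k}" using dom_R[of k] k Domain_mp by (metis less_imp_le)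
  have Rphi: "Range ?\<phi> = \<sigma> ` d ` {..<k}" using ran_R[of k] k Range_mp by (metis less_imp_le)
  have npd: "\<not> polS (d k)"
  proof -
    have "Gpol (\<sigma> (c k)) = Gpol (\<sigma> (d k))" using G_pol_lbl[OF lbls] .
    then show ?thesis using np sig_pol[OF c_ES[OF k]] sig_pol[OF d_ES[OF k]] by simp
  qed
  have ne: "\<sigma> (c k) \<notin> Domain ?\<phi>"
  proof
    assume "\<sigma> (c k) \<in> Domain ?\<phi>"
    then obtain i where "i < k" "\<sigma> (c k) = \<sigma> (c i)" using Dphi by auto
    then show False using sig_c_inj[of k i] k by simp
  qed
  have ne': "\<sigma> (d k) \<notin> Range ?\<phi>"
  proof
    assume "\<sigma> (d k) \<in> Range ?\<phi>"
    then obtain i where "i < k" "\<sigma> (d k) = \<sigma> (d i)" using Rphi by auto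
    then show False using sig_d_inj[of k i] k by simp
  qed
  have cx: "conf Gev Gle GCon (insert (\<sigma> (c k)) (Domain ?\<phi>))"
  proof -
    have "insert (\<sigma> (c k)) (Domain ?\<phi>) = \<sigma> ` cause leS (c k)"
      using Dphi cause_ck[OF k] by (auto simp: atMost_lessThan_Suc)
    then show ?thesis using sig_conf[OF cause_conf[OF c_ES[OF k]]] by simp
  qed
  have cy: "conf Gev Gle GCon (insert (\<sigma> (d k)) (Range ?\<phi>))"
  proof -
    have "insert (\<sigma> (d k)) (Range ?\<phi>) = \<sigma> ` cause leS (d k)"
      using Rphi cause_dk[OF k] by (auto simp: atMost_lessThan_Suc)
    then show ?thesis using sig_conf[OF cause_conf[OF d_ES[OF k]]] by simp
  qed
  have ord: "Gle a (\<sigma> (c k)) \<longleftrightarrow> Gle b (\<sigma> (d k))" if ab: "(a, b) \<in> ?\<phi>" for a b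
  proof -
    obtain i where i: "i < k" "a = \<sigma> (c i)" "b = \<sigma> (d i)" using ab by (auto simp: tc.R_def)
    then obtain m where km: "k = Suc m" by (cases k) auto
    have m: "m < n" "m < k" using km k by auto
    have im1: "imm Gle (\<sigma> (c m)) (\<sigma> (c k))"
      using court[OF tc.A.c_imm[of m]] km k np by simp
    have im2: "imm Gle (\<sigma> (d m)) (\<sigma> (d k))"
      using court[OF tc.B.c_imm[of m]] km k npd eqn by simp
    have nei: "\<sigma> (c i) \<noteq> \<sigma> (c k)" "\<sigma> (d i) \<noteq> \<sigma> (d k)" using sig_c_inj sig_d_inj i k by auto
    have "Gle (\<sigma> (c i)) (\<sigma> (c k)) \<longleftrightarrow> Gle (\<sigma> (c i)) (\<sigma> (c m))"
    proof
      assume "Gle (\<sigma> (c i)) (\<sigma> (c k))"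
      then show "Gle (\<sigma> (c i)) (\<sigma> (c m))" using G_imm_below[OF im1] nei(1) by blast
    next
      assume "Gle (\<sigma> (c i)) (\<sigma> (c m))"
      moreover have "Gle (\<sigma> (c m)) (\<sigma> (c k))" using im1 by (simp add: imm_def)
      ultimately show "Gle (\<sigma> (c i)) (\<sigma> (c k))" by (rule G_trans)
    qed
    also have "\<dots> \<longleftrightarrow> Gle (\<sigma> (d i)) (\<sigma> (d m))"
    proof (rule Giso_op[OF ph])
      show "(\<sigma> (c i), \<sigma> (d i)) \<in> ?\<phi>" using i by (force simp: tc.R_def)
      show "(\<sigma> (c m), \<sigma> (d m)) \<in> ?\<phi>" using m by (force simp: tc.R_def)
    qed
    also have "\<dots> \<longleftrightarrow> Gle (\<sigma> (d i)) (\<sigma> (d k))"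
    proof
      assume "Gle (\<sigma> (d i)) (\<sigma> (d k))"
      then show "Gle (\<sigma> (d i)) (\<sigma> (d m))" using G_imm_below[OF im2] nei(2) by blast
    next
      assume "Gle (\<sigma> (d i)) (\<sigma> (d m))"
      moreover have "Gle (\<sigma> (d m)) (\<sigma> (d k))" using im2 by (simp add: imm_def)
      ultimately show "Gle (\<sigma> (d i)) (\<sigma> (d k))" by (rule G_trans)
    qed
    finally show ?thesis using i by simp
  qed
  have ins: "insert (\<sigma> (c k), \<sigma> (d k)) ?\<phi> \<in> Giso"
    using Giso_insert[OF ph ne ne' cx cy lbls ord] by blast
  have gp: "\<not> Gpol (\<sigma> (c k))" "\<not> Gpol (\<sigma> (d k))"
    using np npd sig_pol[OF c_ES[OF k]] sig_pol[OF d_ES[OF k]] by auto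
  have "\<exists>!p. fst p \<notin> Domain (tc.R k) \<and> insert p (tc.R k) \<in> IsoS \<and> \<sigma> (fst p) = \<sigma> (c k) \<and> \<sigma> (snd p) = \<sigma> (d k)"
    using srec[unfolded strong_receptive_def, rule_format, OF Rk gp(1) gp(2) ne ins] .
  then obtain p where
    p: "fst p \<notin> Domain (tc.R k)" "insert p (tc.R k) \<in> IsoS" "\<sigma> (fst p) = \<sigma> (c k)" "\<sigma> (snd p) = \<sigma> (d k)"
    by (metis (no_types, lifting) ex1_implies_ex)
  obtain u v where uv: "p = (u, v)" by (cases p)
  have cD: "conf ES leS ConS (Domain (insert p (tc.R k)))" and cR: "conf ES leS ConS (Range (insert p (tc.R k)))"
    using iso_conf[OF p(2)] by auto
  have u: "u = c k"
  proof -
    have cu: "conf ES leS ConS (Domain (insert p (tc.R k)) \<union> cause leS (c k))"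
      using union_conf[OF cD cause_conf[OF c_ES[OF k]]] .
    have xi: "u \<in> Domain (insert p (tc.R k)) \<union> cause leS (c k)" using uv by (intro UnI1) force
    have ck: "c k \<in> cause leS (c k)" using tc.A.e_in_cause tc.A.c_prop k eqn by metis
    have yi: "c k \<in> Domain (insert p (tc.R k)) \<union> cause leS (c k)" using ck by (rule UnI2)
    have "\<sigma> u = \<sigma> (c k)" using p(3) uv by simp
    then show ?thesis using inj_onD[OF sig_inj[OF cu] _ xi yi] by blast
  qed
  have v: "v = d k"
  proof -
    have cu: "conf ES leS ConS (Range (insert p (tc.R k)) \<union> cause leS (d k))"
      using union_conf[OF cR cause_conf[OF d_ES[OF k]]] .
    have xi: "v \<in> Range (insert p (tc.R k)) \<union> cause leS (d k)" using uv by (intro UnI1) force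
    have ck: "d k \<in> cause leS (d k)" using tc.B.e_in_cause tc.B.c_prop k eqn by metis
    have yi: "d k \<in> Range (insert p (tc.R k)) \<union> cause leS (d k)" using ck by (rule UnI2)
    have "\<sigma> v = \<sigma> (d k)" using p(4) uv by simp
    then show ?thesis using inj_onD[OF sig_inj[OF cu] _ xi yi] by blast
  qed
  show ?thesis using p(2) uv u v R_Suc by simp
qed

lemma step_pos:
  assumes k: "k < n" and Rk: "tc.R k \<in> IsoS" and pc: "polS (c k)" and pd: "polS (d k)"
  shows "tc.R (Suc k) \<in> IsoS"
proof -
  have kn0: "k \<noteq> 0"
  proof
    assume "k = 0"
    then have "is_min leS (c k)" using tc.A.c0_min by simp
    then have "\<not> polS (c k)" using neg c_ES[OF k] by (simp add: negative_strat_def)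
    then show False using pc by simp
  qed
  then obtain m where km: "k = Suc m" by (cases k) auto
  have m: "m < n" "m < k" using km k by auto
  have kn': "k < card (cause leS s')" using k eqn by simp
  have cck: "cause leS (c k) = c ` {..k}" using cause_ck[OF k] .
  have DRk: "Domain (tc.R k) \<subseteq> cause leS (c k)"
    using dom_R[of k] k cck by auto
  obtain \<theta>' where th: "\<theta>' \<in> IsoS" and sub: "tc.R k \<subseteq> \<theta>'" and Dth: "Domain \<theta>' = cause leS (c k)"
    using iso_ext[OF Rk cause_conf[OF c_ES[OF k]] DRk] by blast
  have bj: "bij_rel \<theta>' (Domain \<theta>') (Range \<theta>')" and cRg: "conf ES leS ConS (Range \<theta>')"
    using iso_conf[OF th] by auto
  have u1: "y = y'" if "(x, y) \<in> \<theta>'" "(x, y') \<in> \<theta>'" for x y y'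
  proof -
    have "x \<in> Domain \<theta>'" using that by blast
    then show ?thesis using bj that unfolding bij_rel_def by blast
  qed
  have u2: "x = x'" if "(x, y) \<in> \<theta>'" "(x', y) \<in> \<theta>'" for x x' y
  proof -
    have "y \<in> Range \<theta>'" using that by blast
    then show ?thesis using bj that unfolding bij_rel_def by blast
  qed
  have ckD: "c k \<in> Domain \<theta>'" using Dth cck by simp
  then obtain t where ct: "(c k, t) \<in> \<theta>'" by blast
  have cdi: "(c i, d i) \<in> \<theta>'" if "i < k" for i
    using sub that by (auto simp: tc.R_def)
  have tnot: "t \<notin> d ` {..<k}"
  proof
    assume "t \<in> d ` {..<k}"
    then obtain i where i: "i < k" "t = d i" by blast
    then have "c i = c k" using u2[OF cdi[OF i(1)]] ct by simp
    then show False using tc.A.c_inj[of i k] i k by simp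
  qed
  have Rg: "Range \<theta>' = insert t (d ` {..<k})"
  proof
    show "Range \<theta>' \<subseteq> insert t (d ` {..<k})"
    proof
      fix y assume "y \<in> Range \<theta>'"
      then obtain x where xy: "(x, y) \<in> \<theta>'" by blast
      then have "x \<in> c ` {..k}" using Dth cck by blast
      then obtain i where i: "i \<le> k" "x = c i" by blast
      show "y \<in> insert t (d ` {..<k})"
      proof (cases "i = k")
        case True
        then show ?thesis using u1[OF xy] ct i by simp
      next
        case False
        then have "i < k" using i by simp
        then show ?thesis using u1[OF xy] cdi i by auto
      qed
    qed
    show "insert t (d ` {..<k}) \<subseteq> Range \<theta>'" using ct cdi by blast
  qed
  have tES: "t \<in> ES" using cRg ct by (auto simp: conf_def)
  have inv: "\<theta>'\<inverse> \<in> IsoS" using iso_inv[OF th] .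
  have tsub: "cause leS t \<subseteq> Domain (\<theta>'\<inverse>)"
  proof -
    have "t \<in> Range \<theta>'" using ct by blast
    then have "cause leS t \<subseteq> Range \<theta>'" using cRg unfolding conf_def downclosed_def cause_def by blast
    then show ?thesis by simp
  qed
  let ?\<rho> = "\<theta>'\<inverse> \<inter> (cause leS t \<times> UNIV)"
  have rho: "?\<rho> \<in> IsoS" using iso_restr[OF inv cause_conf[OF tES] tsub] .
  have bjr: "bij_rel ?\<rho> (Domain ?\<rho>) (Range ?\<rho>)" and cRr: "conf ES leS ConS (Range ?\<rho>)"
    using iso_conf[OF rho] by auto
  have Dr: "Domain ?\<rho> = cause leS t" using tsub by auto
  have tt: "t \<in> cause leS t" using es_refl[OF esS tES] by (simp add: cause_def)
  have Rr: "Range ?\<rho> = cause leS (c k)"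
  proof
    show "Range ?\<rho> \<subseteq> cause leS (c k)" using Dth by auto
    have "c k \<in> Range ?\<rho>" using ct tt by blast
    then show "cause leS (c k) \<subseteq> Range ?\<rho>" using cRr unfolding conf_def downclosed_def cause_def by blast
  qed
  have fin_t: "finite (cause leS t)" using es_fin[OF esS tES] by (simp add: cause_def)
  have c1: "card (cause leS t) = Suc k"
    using bij_rel_card[OF bjr] Dr Rr fin_t tc.A.c_prop[OF k] by simp
  have injd: "inj_on d {..<k}"
    by (rule inj_onI) (use tc.B.c_inj k eqn in auto)
  have c2: "card (insert t (d ` {..<k})) = Suc k"
    using tnot card_image[OF injd] by simp
  have tEq: "cause leS t = insert t (d ` {..<k})"
    using card_subset_eq[of "insert t (d ` {..<k})" "cause leS t"] tsub Rg c1 c2 by simp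
  have dm_t: "leS (d m) t"
  proof -
    have "d m \<in> cause leS t" using tEq m by simp
    then show ?thesis by (simp add: cause_def)
  qed
  have im_t: "imm leS (d m) t"
    unfolding imm_def
  proof (intro conjI)
    show "leS (d m) t" by fact
    show "d m \<noteq> t" using tnot m by auto
    show "\<not> (\<exists>e. leS (d m) e \<and> leS e t \<and> e \<noteq> d m \<and> e \<noteq> t)"
    proof
      assume "\<exists>e. leS (d m) e \<and> leS e t \<and> e \<noteq> d m \<and> e \<noteq> t"
      then obtain e where e: "leS (d m) e" "leS e t" "e \<noteq> d m" "e \<noteq> t" by blast
      then have "e \<in> insert t (d ` {..<k})" using tEq e(2) unfolding cause_def by blast
      then obtain j where j: "j < k" "e = d j" using e(4) by blast
      then have "m \<le> j" using tc.B.c_le_iff[of m j] e(1) m k eqn by simp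
      then have "j = m" using j km by simp
      then show False using e j by simp
    qed
  qed
  have im_d: "imm leS (d m) (d k)" using tc.B.c_imm[of m] km kn' by simp
  have pt: "polS t"
  proof -
    have "(\<sigma> (c k), \<sigma> t) \<in> map_prod \<sigma> \<sigma> ` \<theta>'" using ct by force
    then have "Glbl (\<sigma> (c k)) = Glbl (\<sigma> t)" by (rule Giso_lbl[OF sig_iso[OF th]])
    then have "Gpol (\<sigma> (c k)) = Gpol (\<sigma> t)" by (rule G_pol_lbl)
    then show ?thesis using sig_pol[OF c_ES[OF k]] sig_pol[OF tES] pc by simp
  qed
  have tdk: "t = d k"
  proof (rule ccontr)
    assume ne: "t \<noteq> d k"
    have "\<not> conf ES leS ConS (cause leS t \<union> cause leS (d k))" using fseq[OF im_t im_d ne pt pd] .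
    moreover have "conf ES leS ConS (cause leS t \<union> cause leS (d k))"
      using union_conf[OF cause_conf[OF tES] cause_conf[OF d_ES[OF k]]] .
    ultimately show False by simp
  qed
  have "\<theta>' = tc.R (Suc k)"
  proof
    show "\<theta>' \<subseteq> tc.R (Suc k)"
    proof
      fix p assume p: "p \<in> \<theta>'"
      obtain x y where xy: "p = (x, y)" by (cases p)
      then have "x \<in> c ` {..k}" using Dth cck p by blast
      then obtain i where i: "i \<le> k" "x = c i" by blast
      have "y = d i"
      proof (cases "i = k")
        case True
        then show ?thesis using u1[of x y t] p xy ct i tdk by simp
      next
        case False
        then have "i < k" using i by simp
        then show ?thesis using u1[of x y "d i"] p xy cdi i by simp
      qed
      then show "p \<in> tc.R (Suc k)" using xy i by (auto simp: tc.R_def)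
    qed
    show "tc.R (Suc k) \<subseteq> \<theta>'" using R_Suc sub ct tdk by simp
  qed
  then show ?thesis using th by simp
qed

end




context mainctx begin

lemma P1:
  assumes lbls: "\<And>i. i < n \<Longrightarrow> Glbl (\<sigma> (c i)) = Glbl (\<sigma> (d i))"
  shows "tc.R n \<in> IsoS"
proof -
  have "k \<le> n \<Longrightarrow> tc.R k \<in> IsoS" for k
  proof (induction k)
    case 0
    have "tc.R 0 = Id_on {}" by (simp add: tc.R_def)
    then show ?case using iso_id[OF empty_conf] by simp
  next
    case (Suc k)
    then have k: "k < n" by simp
    have Rk: "tc.R k \<in> IsoS" using Suc by simp
    show ?case
    proof (cases "polS (c k)")
      case True
      have "Gpol (\<sigma> (c k)) = Gpol (\<sigma> (d k))" using G_pol_lbl[OF lbls[OF k]] .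
      then have "polS (d k)" using True sig_pol[OF c_ES[OF k]] sig_pol[OF d_ES[OF k]] by simp
      then show ?thesis using step_pos[OF k Rk True] by simp
    next
      case False
      then show ?thesis using step_neg[OF k Rk False lbls[OF k]] by simp
    qed
  qed
  then show ?thesis by simp
qed

lemma ps_eq:
  "pointing_seq EA leA EB leB leS \<sigma> s =
    (map (\<lambda>i. Glbl (\<sigma> (c i))) [0..<n],
     {(i, j). i < n \<and> j < n \<and> (imm Gle (\<sigma> (c j)) (\<sigma> (c i)) \<or> (j = 0 \<and> G_minA EA leA (\<sigma> (c i))))})"
  by (simp add: pointing_seq_def Let_def)

lemma ps_eq':
  "pointing_seq EA leA EB leB leS \<sigma> s' =
    (map (\<lambda>i. Glbl (\<sigma> (d i))) [0..<n],
     {(i, j). i < n \<and> j < n \<and> (imm Gle (\<sigma> (d j)) (\<sigma> (d i)) \<or> (j = 0 \<and> G_minA EA leA (\<sigma> (d i))))})"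
  by (simp add: pointing_seq_def Let_def eqn)

lemma ps_lbls:
  assumes "pointing_seq EA leA EB leB leS \<sigma> s = pointing_seq EA leA EB leB leS \<sigma> s'"
  shows "i < n \<Longrightarrow> Glbl (\<sigma> (c i)) = Glbl (\<sigma> (d i))"
proof -
  assume i: "i < n"
  have "map (\<lambda>i. Glbl (\<sigma> (c i))) [0..<n] = map (\<lambda>i. Glbl (\<sigma> (d i))) [0..<n]"
    using assms ps_eq ps_eq' by simp
  then show ?thesis using i unfolding map_eq_conv by simp
qed

lemma below_c: "b < n \<Longrightarrow> Gle z (\<sigma> (c b)) \<Longrightarrow> \<exists>m<n. z = \<sigma> (c m)"
proof -
  assume b: "b < n" and z: "Gle z (\<sigma> (c b))"
  have cf: "conf Gev Gle GCon (\<sigma> ` cause leS s)" using sig_conf[OF cause_conf[OF sS]] .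
  have "\<sigma> (c b) \<in> \<sigma> ` cause leS s" using c_cs[OF b] by blast
  then have "z \<in> \<sigma> ` cause leS s" using cf z unfolding conf_def downclosed_def by blast
  then obtain x where x: "x \<in> cause leS s" "z = \<sigma> x" by blast
  then obtain m where "m < n" "c m = x" using tc.A.c_surj by (auto simp: cause_def)
  then show ?thesis using x by blast
qed

lemma below_d: "b < n \<Longrightarrow> Gle z (\<sigma> (d b)) \<Longrightarrow> \<exists>m<n. z = \<sigma> (d m)"
proof -
  assume b: "b < n" and z: "Gle z (\<sigma> (d b))"
  have cf: "conf Gev Gle GCon (\<sigma> ` cause leS s')" using sig_conf[OF cause_conf[OF sS']] .
  have "\<sigma> (d b) \<in> \<sigma> ` cause leS s'" using d_cs[OF b] by blast
  then have "z \<in> \<sigma> ` cause leS s'" using cf z unfolding conf_def downclosed_def by blast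
  then obtain x where x: "x \<in> cause leS s'" "z = \<sigma> x" by blast
  then obtain m where "m < card (cause leS s')" "d m = x" using tc.B.c_surj by (auto simp: cause_def)
  then show ?thesis using x eqn by metis
qed

lemma P3:
  assumes ph: "map_prod \<sigma> \<sigma> ` tc.R n \<in> Giso"
  shows "pointing_seq EA leA EB leB leS \<sigma> s = pointing_seq EA leA EB leB leS \<sigma> s'"
proof -
  let ?\<phi> = "map_prod \<sigma> \<sigma> ` tc.R n"
  have pr: "i < n \<Longrightarrow> (\<sigma> (c i), \<sigma> (d i)) \<in> ?\<phi>" for i by (force simp: tc.R_def)
  have lab: "i < n \<Longrightarrow> Glbl (\<sigma> (c i)) = Glbl (\<sigma> (d i))" for i
    using Giso_lbl[OF ph pr] by blast
  have L: "a < n \<Longrightarrow> b < n \<Longrightarrow> Gle (\<sigma> (c a)) (\<sigma> (c b)) \<longleftrightarrow> Gle (\<sigma> (d a)) (\<sigma> (d b))" for a b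
    using Giso_op[OF ph pr pr] by blast
  have L': "a < n \<Longrightarrow> b < n \<Longrightarrow> Gle (\<sigma> (d a)) (\<sigma> (d b)) \<longleftrightarrow> Gle (\<sigma> (c a)) (\<sigma> (c b))" for a b
    using L by blast
  have fi: "a < n \<Longrightarrow> b < n \<Longrightarrow> \<sigma> (c a) = \<sigma> (c b) \<longleftrightarrow> a = b" for a b using sig_c_inj .
  have gi: "a < n \<Longrightarrow> b < n \<Longrightarrow> \<sigma> (d a) = \<sigma> (d b) \<longleftrightarrow> a = b" for a b using sig_d_inj .
  have imm_iff: "i < n \<Longrightarrow> j < n \<Longrightarrow> imm Gle (\<sigma> (c j)) (\<sigma> (c i)) \<longleftrightarrow> imm Gle (\<sigma> (d j)) (\<sigma> (d i))" for i j
  proof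
    assume i: "i < n" and j: "j < n"
    show "imm Gle (\<sigma> (c j)) (\<sigma> (c i)) \<Longrightarrow> imm Gle (\<sigma> (d j)) (\<sigma> (d i))"
      by (rule imm_xfer[where L = "G_le EA leA EB leB" and n = "card (cause leS s)" and f = "\<lambda>i. \<sigma> (c i)" and g = "\<lambda>i. \<sigma> (d i)", OF L fi gi below_d i j])
    show "imm Gle (\<sigma> (d j)) (\<sigma> (d i)) \<Longrightarrow> imm Gle (\<sigma> (c j)) (\<sigma> (c i))"
      by (rule imm_xfer[where L = "G_le EA leA EB leB" and n = "card (cause leS s)" and g = "\<lambda>i. \<sigma> (c i)" and f = "\<lambda>i. \<sigma> (d i)", OF L' gi fi below_c i j])
  qed
  have min_iff: "i < n \<Longrightarrow> G_minA EA leA (\<sigma> (c i)) \<longleftrightarrow> G_minA EA leA (\<sigma> (d i))" for i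
  proof -
    assume i: "i < n"
    have isl: "isl (\<sigma> (c i)) = isl (\<sigma> (d i))" using lbl_isl[OF lab[OF i]] .
    have ev: "\<sigma> (c i) \<in> Gev" "\<sigma> (d i) \<in> Gev" using sig_ev c_ES d_ES i by auto
    have m1: "(\<forall>z. Gle z (\<sigma> (c i)) \<longrightarrow> z = \<sigma> (c i)) \<Longrightarrow> (\<forall>z. Gle z (\<sigma> (d i)) \<longrightarrow> z = \<sigma> (d i))"
      by (rule min_xfer[where L = "G_le EA leA EB leB" and n = "card (cause leS s)" and f = "\<lambda>i. \<sigma> (c i)" and g = "\<lambda>i. \<sigma> (d i)", OF L fi gi below_d i])
    have m2: "(\<forall>z. Gle z (\<sigma> (d i)) \<longrightarrow> z = \<sigma> (d i)) \<Longrightarrow> (\<forall>z. Gle z (\<sigma> (c i)) \<longrightarrow> z = \<sigma> (c i))"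
      by (rule min_xfer[where L = "G_le EA leA EB leB" and n = "card (cause leS s)" and g = "\<lambda>i. \<sigma> (c i)" and f = "\<lambda>i. \<sigma> (d i)", OF L' gi fi below_c i])
    show ?thesis unfolding G_minA_alt using isl ev m1 m2 by blast
  qed
  have e1: "map (\<lambda>i. Glbl (\<sigma> (c i))) [0..<n] = map (\<lambda>i. Glbl (\<sigma> (d i))) [0..<n]"
    unfolding map_eq_conv using lab by simp
  have e2: "{(i, j). i < n \<and> j < n \<and> (imm Gle (\<sigma> (c j)) (\<sigma> (c i)) \<or> (j = 0 \<and> G_minA EA leA (\<sigma> (c i))))}
          = {(i, j). i < n \<and> j < n \<and> (imm Gle (\<sigma> (d j)) (\<sigma> (d i)) \<or> (j = 0 \<and> G_minA EA leA (\<sigma> (d i))))}"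
    using imm_iff min_iff by blast
  show ?thesis unfolding ps_eq ps_eq' using e1 e2 by simp
qed

lemma main:
  "(pointing_seq EA leA EB leB leS \<sigma> s = pointing_seq EA leA EB leB leS \<sigma> s'
      \<longleftrightarrow> chain_iso leS s s' \<in> IsoS)
   \<and> (chain_iso leS s s' \<in> IsoS
      \<longleftrightarrow> map_prod \<sigma> \<sigma> ` chain_iso leS s s' \<in> G_iso EA leA EB leB)"
  unfolding tc.chain_iso_R
  using P1 P3 ps_lbls sig_iso by blast

end


theorem mainTheorem14:
  fixes EA :: "'a set" and leA :: "'a \<Rightarrow> 'a \<Rightarrow> bool" and polA :: "'a \<Rightarrow> bool"
    and EB :: "'b set" and leB :: "'b \<Rightarrow> 'b \<Rightarrow> bool" and polB :: "'b \<Rightarrow> bool"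
    and ES :: "'s set" and leS :: "'s \<Rightarrow> 's \<Rightarrow> bool" and ConS :: "'s set set"
    and polS :: "'s \<Rightarrow> bool" and IsoS :: "('s \<times> 's) set set"
    and \<sigma> :: "'s \<Rightarrow> ('a, 'b) gev" and s s' :: 's
  assumes "neg_arena EA leA polA"
    and "neg_arena EB leB polB"
    and "tilde_strategy ES leS ConS polS IsoS
           (G_ev EA leA EB leB) (G_le EA leA EB leB) (G_Con EA leA EB leB)
           (G_pol leA polA leB polB) (G_iso EA leA EB leB) \<sigma>"
    and "negative_strat ES leS polS"
    and "deterministic ES ConS"
    and "sequential_innocent ES leS ConS polS"
    and "s \<in> ES" and "s' \<in> ES"
    and "card (cause leS s) = card (cause leS s')"
  shows "(pointing_seq EA leA EB leB leS \<sigma> s = pointing_seq EA leA EB leB leS \<sigma> s'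
            \<longleftrightarrow> chain_iso leS s s' \<in> IsoS)
       \<and> (chain_iso leS s s' \<in> IsoS
            \<longleftrightarrow> map_prod \<sigma> \<sigma> ` chain_iso leS s s' \<in> G_iso EA leA EB leB)"
proof -
  interpret mainctx EA leA polA EB leB polB ES leS ConS polS IsoS \<sigma> s s'
    using assms by (intro mainctx.intro game.intro mainctx_axioms.intro) auto
  show ?thesis using main .
qed

end
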